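(* Let $z,w,u>0$ be parameters for which $\mathcal H(z,w,u)$ and the generating functions below are finite, and suppose that $\Gamma\mathcal{DAG}$ is a procedure such that, for every $t\in[0,u]$, $\Gamma\mathcal{DAG}(\frac{z}{1+w},w,t)$ returns each labelled DAG $G$ with probability $\frac{(z/(1+w))^{v(G)}w^{e(G)}t^{s(G)}}{(1+w)^{\binom{v(G)}2}v(G)!\,\mathrm{DAG}(\frac{z}{1+w},w,t)}$. Then the procedure $\Gamma\mathcal H(z,w,u)$ described below returns each $\mathcal H$-structure $H$ with $n$ vertices, $m$ edges and $k$ sources with probability \[\mathbb P[\Gamma\mathcal H(z,w,u)=H]=\frac{z^{n}w^{m}u^{k}}{n!\,(1+w)^{\binom n2}\,\mathcal H(z,w,u)}.\]
   Context: $\mathrm{Set}(z,w)=\sum_{n\ge0}\frac{z^n}{(1+w)^{\binom n2}n!}$. A labelled DAG with $n$ vertices is a directed acyclic graph on vertex set $\{1,\dots,n\}$; $v(G),e(G),s(G)$ denote its numbers of vertices, edges and sources (vertices of in-degree $0$). $\mathrm{DAG}(z,w,u)=\sum_G \frac{z^{v(G)}w^{e(G)}u^{s(G)}}{(1+w)^{\binom{v(G)}{2}}v(G)!}=\frac{\mathrm{Set}((u-1)z,w)}{\mathrm{Set}(-z,w)}$. An $\mathcal H$-structure is a labelled DAG with at least one vertex whose source with the smallest label is an isolated vertex (no incoming or outgoing edges); this vertex is called its distinguished source. $\mathcal H(z,w,u)=\sum_H \frac{z^{v(H)}w^{e(H)}u^{s(H)}}{(1+w)^{\binom{v(H)}2}v(H)!}$,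 the sum over all $\mathcal H$-structures. Procedure $\Gamma\mathcal H(z,w,u)$: draw $x$ uniform in $[0,1)$; compute the unique $t\in[0,u]$ with $\frac{\mathrm{Set}((t-1)z,w)-\mathrm{Set}(-z,w)}{\mathrm{Set}((u-1)z,w)-\mathrm{Set}(-z,w)}=x$; let $G_1=\Gamma\mathcal{DAG}(\frac z{1+w},w,t)$; form $H$ by adding a new isolated vertex $v$ to $G_1$, with $n=v(G_1)+1$; give $v$ a uniformly random label in $\{1,\dots,n\}$ and relabel $G_1$ order-preservingly with the remaining labels; finally, if the sources of $H$ carry labels $\ell_1<\dots<\ell_k$ and $v$ carries $\ell_r$, cyclically permute the labels of the sources (source with label $\ell_i$ receives label $\ell_{i-r+1 \bmod k}$) so that $v$ has the smallest source label; return $H$. *)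

theory Defs
  imports "HOL-Probability.Probability"
begin

text \<open>A labelled digraph on vertex set {1..n} is a pair (n, E) with E a set of arcs.\<close>
type_synonym ldg = "nat \<times> (nat \<times> nat) set"

definition is_dag :: "ldg \<Rightarrow> bool" where
  "is_dag G \<longleftrightarrow> snd G \<subseteq> {1..fst G} \<times> {1..fst G} \<and> acyclic (snd G)"

definition nverts :: "ldg \<Rightarrow> nat" where "nverts G = fst G"
definition nedges :: "ldg \<Rightarrow> nat" where "nedges G = card (snd G)"
definition sources :: "ldg \<Rightarrow> nat set" where
  "sources G = {v \<in> {1..fst G}. \<forall>a. (a, v) \<notin> snd G}"
definition nsources :: "ldg \<Rightarrow> nat" where "nsources G = card (sources G)"

definition is_H :: "ldg \<Rightarrow> bool" where
  "is_H G \<longleftrightarrow> is_dag G \<and> fst G \<ge> 1 \<and>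
     (\<forall>a. (a, Min (sources G)) \<notin> snd G \<and> (Min (sources G), a) \<notin> snd G)"

definition weight :: "real \<Rightarrow> real \<Rightarrow> real \<Rightarrow> ldg \<Rightarrow> real" where
  "weight z w u G = z ^ nverts G * w ^ nedges G * u ^ nsources G /
      ((1 + w) ^ (nverts G choose 2) * fact (nverts G))"

definition dags_of_size :: "nat \<Rightarrow> ldg set" where
  "dags_of_size n = {G. is_dag G \<and> fst G = n}"
definition Hs_of_size :: "nat \<Rightarrow> ldg set" where
  "Hs_of_size n = {G. is_H G \<and> fst G = n}"

definition DAG_terms :: "real \<Rightarrow> real \<Rightarrow> real \<Rightarrow> nat \<Rightarrow> real" where
  "DAG_terms z w u n = (\<Sum>G\<in>dags_of_size n. weight z w u G)"
definition H_terms :: "real \<Rightarrow> real \<Rightarrow> real \<Rightarrow> nat \<Rightarrow> real" where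
  "H_terms z w u n = (\<Sum>G\<in>Hs_of_size n. weight z w u G)"

definition DAGgf :: "real \<Rightarrow> real \<Rightarrow> real \<Rightarrow> real" where
  "DAGgf z w u = (\<Sum>n. DAG_terms z w u n)"
definition Hgf :: "real \<Rightarrow> real \<Rightarrow> real \<Rightarrow> real" where
  "Hgf z w u = (\<Sum>n. H_terms z w u n)"

definition SetF :: "real \<Rightarrow> real \<Rightarrow> real" where
  "SetF z w = (\<Sum>n. z ^ n / ((1 + w) ^ (n choose 2) * fact n))"

definition tval :: "real \<Rightarrow> real \<Rightarrow> real \<Rightarrow> real \<Rightarrow> real" where
  "tval z w u x = (THE t. t \<in> {0..u} \<and>
     (SetF ((t - 1) * z) w - SetF (- z) w) / (SetF ((u - 1) * z) w - SetF (- z) w) = x)"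

definition shift_lbl :: "nat \<Rightarrow> nat \<Rightarrow> nat" where
  "shift_lbl j i = (if i < j then i else i + 1)"
definition insert_vertex :: "ldg \<Rightarrow> nat \<Rightarrow> ldg" where
  "insert_vertex G1 j = (fst G1 + 1, map_prod (shift_lbl j) (shift_lbl j) ` snd G1)"

definition list_idx :: "nat list \<Rightarrow> nat \<Rightarrow> nat" where
  "list_idx ls x = (THE i. i < length ls \<and> ls ! i = x)"

text \<open>Cyclic permutation of source labels: with sources l_1<...<l_k (0-based list ls) and
  v = ls!r0, the source with label ls!i receives label ls!((i - r0) mod k).\<close>
definition cyc_perm :: "nat list \<Rightarrow> nat \<Rightarrow> nat \<Rightarrow> nat" where
  "cyc_perm ls r0 x = (if x \<in> set ls
      then ls ! ((list_idx ls x + length ls - r0) mod length ls) else x)"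

definition finalize :: "ldg \<Rightarrow> nat \<Rightarrow> ldg" where
  "finalize G1 j = (let H0 = insert_vertex G1 j;
                        ls = sorted_list_of_set (sources H0);
                        r0 = list_idx ls j;
                        \<sigma> = cyc_perm ls r0
                    in (fst H0, map_prod \<sigma> \<sigma> ` snd H0))"

text \<open>Output distribution of the procedure, conditionally on the value t
  (D t is the distribution of Gamma-DAG(z/(1+w), w, t)).\<close>
definition GammaH_given_t :: "(real \<Rightarrow> ldg pmf) \<Rightarrow> real \<Rightarrow> ldg pmf" where
  "GammaH_given_t D t = bind_pmf (D t)
     (\<lambda>G1. map_pmf (finalize G1) (pmf_of_set {1..fst G1 + 1}))"

text \<open>P[Gamma-H(z,w,u) = H], with x uniform on [0,1) (law of total probability).\<close>
definition GammaH_prob :: "(real \<Rightarrow> ldg pmf) \<Rightarrow> real \<Rightarrow> real \<Rightarrow> real \<Rightarrow> ldg \<Rightarrow> real" where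
  "GammaH_prob D z w u H =
     (LINT x:{0..<1}|lborel. pmf (GammaH_given_t D (tval z w u x)) H)"

end

theory Submission
  imports Defs "HOL-Computational_Algebra.Formal_Power_Series"
begin

definition dagsOn :: "nat set \<Rightarrow> (nat \<times> nat) set set" where
  "dagsOn V = {E. E \<subseteq> V \<times> V \<and> acyclic E}"
definition srcOn :: "nat set \<Rightarrow> (nat \<times> nat) set \<Rightarrow> nat set" where
  "srcOn V E = {v \<in> V. \<forall>a. (a, v) \<notin> E}"
definition Wt :: "real \<Rightarrow> nat set \<Rightarrow> real" where
  "Wt w V = (\<Sum>E\<in>dagsOn V. w ^ card E)"
definition Apoly :: "real \<Rightarrow> real \<Rightarrow> nat \<Rightarrow> real" where
  "Apoly w t n = (\<Sum>G\<in>dags_of_size n. w ^ nedges G * t ^ nsources G)"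

lemma finite_dagsOn: "finite V \<Longrightarrow> finite (dagsOn V)"
  by (rule finite_subset[of _ "Pow (V \<times> V)"]) (auto simp: dagsOn_def)

lemma dags_of_size_eq: "dags_of_size n = Pair n ` dagsOn {1..n}"
  by (auto simp: dags_of_size_def dagsOn_def is_dag_def image_iff)

lemma finite_dags_of_size: "finite (dags_of_size n)"
  by (simp add: dags_of_size_eq finite_dagsOn)

lemma Apoly_alt: "Apoly w t n = (\<Sum>E\<in>dagsOn {1..n}. w ^ card E * t ^ card (srcOn {1..n} E))"
  unfolding Apoly_def dags_of_size_eq
  by (subst sum.reindex) (auto simp: inj_on_def nedges_def nsources_def sources_def srcOn_def)

lemma sum_Pow_power: "finite X \<Longrightarrow> (\<Sum>S\<in>Pow X. (x::real) ^ card S) = (1 + x) ^ card X"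
proof (induction X rule: finite_induct)
  case empty thus ?case by simp
next
  case (insert a X)
  have inj: "inj_on (insert a) (Pow X)"
    using insert.hyps by (auto simp: inj_on_def)
  have disj: "Pow X \<inter> insert a ` Pow X = {}" using insert.hyps by auto
  have "(\<Sum>S\<in>Pow (insert a X). x ^ card S) = (\<Sum>S\<in>Pow X. x ^ card S) + (\<Sum>S\<in>insert a ` Pow X. x ^ card S)"
    unfolding Pow_insert using insert.hyps disj by (intro sum.union_disjoint) auto
  also have "(\<Sum>S\<in>insert a ` Pow X. x ^ card S) = (\<Sum>S\<in>Pow X. x * x ^ card S)"
    using insert.hyps by (subst sum.reindex[OF inj]) (auto intro!: sum.cong simp: card_insert_if finite_subset)
  also have "\<dots> = x * (1 + x) ^ card X" by (simp add: sum_distrib_left[symmetric] insert.IH)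
  finally show ?case using insert.hyps insert.IH by (simp add: algebra_simps)
qed

lemma acyclic_union_sources:
  assumes "E' \<subseteq> T \<times> T" "B \<subseteq> S \<times> T" "S \<inter> T = {}" "acyclic E'"
  shows "acyclic (E' \<union> B)"
proof -
  have *: "y \<in> T \<and> ((x, y) \<in> E'\<^sup>+ \<or> x \<in> S)" if "(x, y) \<in> (E' \<union> B)\<^sup>+" for x y
    using that
  proof (induction rule: trancl_induct)
    case (base y) thus ?case using assms by auto
  next
    case (step y z)
    then show ?case using assms by (auto intro: trancl_into_trancl)
  qed
  show ?thesis unfolding acyclic_def using * assms(3,4) unfolding acyclic_def by blast
qed

lemma acyclic_map_inj:
  assumes "inj_on f V" "E \<subseteq> V \<times> V" "acyclic E"
  shows "acyclic (map_prod f f ` E)"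
proof -
  have *: "\<exists>x y. a = f x \<and> b = f y \<and> x \<in> V \<and> y \<in> V \<and> (x, y) \<in> E\<^sup>+"
    if "(a, b) \<in> (map_prod f f ` E)\<^sup>+" for a b
    using that
  proof (induction rule: trancl_induct)
    case (base y) thus ?case using assms by auto
  next
    case (step y z)
    then obtain x y0 where h: "a = f x" "y = f y0" "x \<in> V" "y0 \<in> V" "(x, y0) \<in> E\<^sup>+" by blast
    from step obtain y1 y2 where h2: "(y1, y2) \<in> E" "y = f y1" "z = f y2" by auto
    with assms have "y1 \<in> V" "y2 \<in> V" by auto
    with h h2 assms(1) have "y1 = y0" by (metis inj_onD)
    with h h2 \<open>y2 \<in> V\<close> show ?case by (metis trancl_into_trancl)
  qed
  show ?thesis unfolding acyclic_def
  proof (intro allI notI)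
    fix a assume "(a, a) \<in> (map_prod f f ` E)\<^sup>+"
    from *[OF this] obtain x y where "a = f x" "a = f y" "x \<in> V" "y \<in> V" "(x, y) \<in> E\<^sup>+" by blast
    with assms show False unfolding acyclic_def by (metis inj_onD)
  qed
qed

lemma Wt_bij:
  assumes "bij_betw f V V'"
  shows "Wt w V = Wt w V'"
proof -
  let ?g = "inv_into V f"
  have inj: "inj_on f V" using assms bij_betw_def by blast
  have bg: "bij_betw ?g V' V" using assms by (rule bij_betw_inv_into)
  have ginj: "inj_on ?g V'" using bg bij_betw_def by blast
  have gf: "?g (f x) = x" if "x \<in> V" for x using inj that by simp
  have fg: "f (?g y) = y" if "y \<in> V'" for y using assms that by (simp add: bij_betw_inv_into_right)
  have fV: "f ` V = V'" using assms by (simp add: bij_betw_def)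
  have gV: "?g ` V' = V" using bg by (simp add: bij_betw_def)
  show ?thesis unfolding Wt_def
  proof (rule sum.reindex_bij_witness[where j = "\<lambda>E. map_prod f f ` E" and i = "\<lambda>E. map_prod ?g ?g ` E"])
    fix E assume "E \<in> dagsOn V"
    hence E: "E \<subseteq> V \<times> V" "acyclic E" by (auto simp: dagsOn_def)
    have "\<forall>p\<in>E. map_prod ?g ?g (map_prod f f p) = p" using E gf by auto
    then show "map_prod ?g ?g ` map_prod f f ` E = E"
      by (simp add: image_image)
    show "map_prod f f ` E \<in> dagsOn V'"
      using E acyclic_map_inj[OF inj E] fV by (auto simp: dagsOn_def)
    have "inj_on (map_prod f f) E"
      using map_prod_inj_on[OF inj inj] E(1) inj_on_subset by blast
    then show "w ^ card (map_prod f f ` E) = w ^ card E" by (simp add: card_image)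
  next
    fix E assume "E \<in> dagsOn V'"
    hence E: "E \<subseteq> V' \<times> V'" "acyclic E" by (auto simp: dagsOn_def)
    have "\<forall>p\<in>E. map_prod f f (map_prod ?g ?g p) = p" using E fg by auto
    then show "map_prod f f ` map_prod ?g ?g ` E = E"
      by (simp add: image_image)
    show "map_prod ?g ?g ` E \<in> dagsOn V"
      using E acyclic_map_inj[OF ginj E] gV by (auto simp: dagsOn_def)
  qed
qed

lemma Wt_card: "finite V \<Longrightarrow> Wt w V = Apoly w 1 (card V)"
proof -
  assume "finite V"
  then obtain h where "bij_betw h V {1..card V}"
    using finite_same_card_bij[of V "{1..card V}"] by auto
  hence "Wt w V = Wt w {1..card V}" by (rule Wt_bij)
  thus ?thesis by (simp add: Apoly_alt Wt_def)
qed

lemma sum_src_subset: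
  assumes V: "finite V" and S: "S \<subseteq> V"
  shows "(\<Sum>E\<in>{E\<in>dagsOn V. S \<subseteq> srcOn V E}. w ^ card E) =
         (1 + w) ^ (card S * card (V - S)) * Wt w (V - S)"
proof -
  define T where "T = V - S"
  have ST: "S \<inter> T = {}" "V = S \<union> T" using S by (auto simp: T_def)
  have fT: "finite T" "finite S" using V S by (auto simp: T_def finite_subset)
  have "(\<Sum>E\<in>{E\<in>dagsOn V. S \<subseteq> srcOn V E}. w ^ card E) =
        (\<Sum>p\<in>dagsOn T \<times> Pow (S \<times> T). w ^ card (fst p) * w ^ card (snd p))"
  proof (rule sum.reindex_bij_witness[where j = "\<lambda>E. (E \<inter> T \<times> T, E \<inter> S \<times> T)" and i = "\<lambda>p. fst p \<union> snd p"])
    fix E assume "E \<in> {E\<in>dagsOn V. S \<subseteq> srcOn V E}"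
    hence E: "E \<subseteq> V \<times> V" "acyclic E" "S \<subseteq> srcOn V E" by (auto simp: dagsOn_def)
    show "fst (E \<inter> T \<times> T, E \<inter> S \<times> T) \<union> snd (E \<inter> T \<times> T, E \<inter> S \<times> T) = E"
      using E ST by (auto simp: srcOn_def)
    show "(E \<inter> T \<times> T, E \<inter> S \<times> T) \<in> dagsOn T \<times> Pow (S \<times> T)"
      using E by (auto simp: dagsOn_def intro: acyclic_subset)
    have "finite E" using E(1) V by (meson finite_SigmaI finite_subset)
    hence "card E = card (E \<inter> T \<times> T) + card (E \<inter> S \<times> T)"
      using E ST by (subst card_Un_disjoint[symmetric]) (auto intro!: arg_cong[where f=card] simp: srcOn_def)
    thus "w ^ card (fst (E \<inter> T \<times> T, E \<inter> S \<times> T)) * w ^ card (snd (E \<inter> T \<times> T, E \<inter> S \<times> T)) = w ^ card E"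
      by (simp add: power_add)
  next
    fix p assume p: "p \<in> dagsOn T \<times> Pow (S \<times> T)"
    hence P: "fst p \<subseteq> T \<times> T" "acyclic (fst p)" "snd p \<subseteq> S \<times> T" by (auto simp: dagsOn_def)
    show "((fst p \<union> snd p) \<inter> T \<times> T, (fst p \<union> snd p) \<inter> S \<times> T) = p"
      using P ST by (cases p) auto
    show "fst p \<union> snd p \<in> {E \<in> dagsOn V. S \<subseteq> srcOn V E}"
      using P ST acyclic_union_sources[OF P(1) P(3) ST(1) P(2)] by (auto simp: dagsOn_def srcOn_def)
  qed
  also have "\<dots> = Wt w T * (\<Sum>B\<in>Pow (S \<times> T). w ^ card B)"
    unfolding Wt_def sum_product by (simp add: sum.cartesian_product case_prod_beta)
  also have "(\<Sum>B\<in>Pow (S \<times> T). w ^ card B) = (1 + w) ^ (card S * card T)"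
    using fT by (simp add: sum_Pow_power card_cartesian_product)
  finally show ?thesis by (simp add: T_def mult.commute)
qed

lemma sum_Pow_card_group:
  assumes "finite V"
  shows "(\<Sum>S\<in>Pow V. g (card S)) = (\<Sum>a\<le>card V. of_nat (card V choose a) * (g a :: real))"
proof -
  have "(\<Sum>S\<in>Pow V. g (card S)) = (\<Sum>a\<le>card V. \<Sum>S\<in>{S\<in>Pow V. card S = a}. g (card S))"
    using assms by (intro sum.group[symmetric]) (auto intro: card_mono)
  also have "\<dots> = (\<Sum>a\<le>card V. of_nat (card V choose a) * g a)"
  proof (intro sum.cong refl)
    fix a
    have "(\<Sum>S\<in>{S\<in>Pow V. card S = a}. g (card S)) = (\<Sum>S\<in>{S\<in>Pow V. card S = a}. g a)" by simp
    also have "\<dots> = of_nat (card {S\<in>Pow V. card S = a}) * g a" by simp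
    also have "{S\<in>Pow V. card S = a} = {S. S \<subseteq> V \<and> card S = a}" by auto
    finally show "(\<Sum>S\<in>{S\<in>Pow V. card S = a}. g (card S)) = of_nat (card V choose a) * g a"
      using n_subsets[OF assms] by simp
  qed
  finally show ?thesis .
qed

theorem Apoly_CI:
  "Apoly w t n = (\<Sum>a\<le>n. of_nat (n choose a) * (t - 1) ^ a * (1 + w) ^ (a * (n - a)) * Apoly w 1 (n - a))"
proof -
  let ?V = "{1..n}"
  have fV: "finite ?V" by simp
  have "Apoly w t n = (\<Sum>E\<in>dagsOn ?V. w ^ card E * (\<Sum>S\<in>Pow (srcOn ?V E). (t - 1) ^ card S))"
    unfolding Apoly_alt
    by (intro sum.cong refl) (simp add: sum_Pow_power finite_subset[of _ ?V] srcOn_def)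
  also have "\<dots> = (\<Sum>E\<in>dagsOn ?V. \<Sum>S\<in>{S\<in>Pow ?V. S \<subseteq> srcOn ?V E}. w ^ card E * (t - 1) ^ card S)"
    by (intro sum.cong refl) (auto simp: sum_distrib_left srcOn_def intro!: sum.cong)
  also have "\<dots> = (\<Sum>S\<in>Pow ?V. \<Sum>E\<in>{E\<in>dagsOn ?V. S \<subseteq> srcOn ?V E}. w ^ card E * (t - 1) ^ card S)"
    by (rule sum.swap_restrict) (auto simp: finite_dagsOn)
  also have "\<dots> = (\<Sum>S\<in>Pow ?V. (t - 1) ^ card S * ((1 + w) ^ (card S * (n - card S)) * Apoly w 1 (n - card S)))"
  proof (intro sum.cong refl)
    fix S assume S: "S \<in> Pow ?V"
    have "(\<Sum>E\<in>{E\<in>dagsOn ?V. S \<subseteq> srcOn ?V E}. w ^ card E * (t - 1) ^ card S) =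
          (t - 1) ^ card S * (\<Sum>E\<in>{E\<in>dagsOn ?V. S \<subseteq> srcOn ?V E}. w ^ card E)"
      by (simp add: sum_distrib_left mult.commute)
    also have "\<dots> = (t - 1) ^ card S * ((1 + w) ^ (card S * card (?V - S)) * Wt w (?V - S))"
      using S by (subst sum_src_subset) auto
    also have "card (?V - S) = n - card S" using S by (subst card_Diff_subset) (auto simp: finite_subset)
    also have "Wt w (?V - S) = Apoly w 1 (n - card S)" using S Wt_card[of "?V - S" w] \<open>card (?V - S) = n - card S\<close> by simp
    finally show "(\<Sum>E\<in>{E\<in>dagsOn ?V. S \<subseteq> srcOn ?V E}. w ^ card E * (t - 1) ^ card S) =
          (t - 1) ^ card S * ((1 + w) ^ (card S * (n - card S)) * Apoly w 1 (n - card S))"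
      by (simp add: Wt_card \<open>card (?V - S) = n - card S\<close>)
  qed
  also have "\<dots> = (\<Sum>a\<le>n. of_nat (n choose a) * ((t - 1) ^ a * ((1 + w) ^ (a * (n - a)) * Apoly w 1 (n - a))))"
    using sum_Pow_card_group[OF fV, of "\<lambda>a. (t - 1) ^ a * ((1 + w) ^ (a * (n - a)) * Apoly w 1 (n - a))"] by simp
  finally show ?thesis by (simp add: mult.assoc)
qed


definition unshift :: "nat \<Rightarrow> nat \<Rightarrow> nat" where
  "unshift j i = (if i < j then i else i - 1)"
definition cinv :: "nat list \<Rightarrow> nat \<Rightarrow> nat \<Rightarrow> nat" where
  "cinv ls r0 x = (if x \<in> set ls then ls ! ((list_idx ls x + r0) mod length ls) else x)"

lemma unshift_shift[simp]: "unshift j (shift_lbl j i) = i"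
  by (simp add: unshift_def shift_lbl_def)
lemma shift_unshift: "i \<noteq> j \<Longrightarrow> shift_lbl j (unshift j i) = i"
  by (auto simp: unshift_def shift_lbl_def)
lemma shift_ne[simp]: "shift_lbl j i \<noteq> j"
  by (simp add: shift_lbl_def)
lemma inj_shift: "inj (shift_lbl j)"
  by (metis injI unshift_shift)

lemma list_idx_nth: "distinct ls \<Longrightarrow> i < length ls \<Longrightarrow> list_idx ls (ls ! i) = i"
  unfolding list_idx_def by (rule the_equality) (auto simp: nth_eq_iff_index_eq)

lemma list_idx_in: "x \<in> set ls \<Longrightarrow> distinct ls \<Longrightarrow> list_idx ls x < length ls \<and> ls ! list_idx ls x = x"
  by (metis in_set_conv_nth list_idx_nth)

lemma mod_back: "i < k \<Longrightarrow> r < (k::nat) \<Longrightarrow> ((i + r) mod k + k - r) mod k = i"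
proof (cases "i + r < k")
  case True thus ?thesis by auto
next
  case False
  assume "i < k" "r < k"
  hence "(i + r) mod k = i + r - k" using False by (simp add: mod_if)
  thus ?thesis using False \<open>i < k\<close> \<open>r < k\<close> by simp
qed

lemma mod_fwd: "i < k \<Longrightarrow> r < (k::nat) \<Longrightarrow> ((i + k - r) mod k + r) mod k = i"
  by (simp add: mod_add_left_eq)

context
  fixes ls :: "nat list" and r0 :: nat
  assumes dist: "distinct ls" and r0: "r0 < length ls"
begin

lemma kpos: "0 < length ls" using r0 by (cases ls) auto

lemma cyc_in: "x \<in> set ls \<Longrightarrow> cyc_perm ls r0 x \<in> set ls"
  using kpos by (simp add: cyc_perm_def)
lemma cinv_in: "x \<in> set ls \<Longrightarrow> cinv ls r0 x \<in> set ls"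
  using kpos by (simp add: cinv_def)
lemma cyc_out: "x \<notin> set ls \<Longrightarrow> cyc_perm ls r0 x = x"
  by (simp add: cyc_perm_def)
lemma cinv_out: "x \<notin> set ls \<Longrightarrow> cinv ls r0 x = x"
  by (simp add: cinv_def)

lemma cinv_cyc[simp]: "cinv ls r0 (cyc_perm ls r0 x) = x"
proof (cases "x \<in> set ls")
  case True
  define i where "i = list_idx ls x"
  have i: "i < length ls" "ls ! i = x" using list_idx_in[OF True dist] i_def by auto
  have m: "(i + length ls - r0) mod length ls < length ls" using kpos by simp
  have "cyc_perm ls r0 x = ls ! ((i + length ls - r0) mod length ls)"
    using True by (simp add: cyc_perm_def i_def)
  moreover have "list_idx ls (ls ! ((i + length ls - r0) mod length ls)) = (i + length ls - r0) mod length ls"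
    using list_idx_nth[OF dist m] .
  ultimately show ?thesis using True i m r0 by (simp add: cinv_def mod_fwd)
next
  case False thus ?thesis by (simp add: cyc_perm_def cinv_def)
qed

lemma cyc_cinv[simp]: "cyc_perm ls r0 (cinv ls r0 x) = x"
proof (cases "x \<in> set ls")
  case True
  define i where "i = list_idx ls x"
  have i: "i < length ls" "ls ! i = x" using list_idx_in[OF True dist] i_def by auto
  have m: "(i + r0) mod length ls < length ls" using kpos by simp
  have "cinv ls r0 x = ls ! ((i + r0) mod length ls)"
    using True by (simp add: cinv_def i_def)
  moreover have "list_idx ls (ls ! ((i + r0) mod length ls)) = (i + r0) mod length ls"
    using list_idx_nth[OF dist m] .
  ultimately show ?thesis using True i m r0 by (simp add: cyc_perm_def mod_back)
next
  case False thus ?thesis by (simp add: cyc_perm_def cinv_def)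
qed

lemma cyc_r0: "cyc_perm ls r0 (ls ! r0) = ls ! 0"
  using r0 dist by (simp add: cyc_perm_def list_idx_nth)

lemma cinv_0: "cinv ls r0 (ls ! 0) = ls ! r0"
  using r0 dist kpos by (simp add: cinv_def list_idx_nth)

lemma inj_cyc: "inj (cyc_perm ls r0)" by (metis injI cinv_cyc)
lemma inj_cinv: "inj (cinv ls r0)" by (metis injI cyc_cinv)

lemma cyc_mem_iff: "cyc_perm ls r0 x \<in> set ls \<longleftrightarrow> x \<in> set ls"
  using cyc_in cyc_out by metis
lemma cinv_mem_iff: "cinv ls r0 x \<in> set ls \<longleftrightarrow> x \<in> set ls"
  using cinv_in cinv_out by metis

end

lemma perm_sources:
  assumes inv1: "\<And>x. \<sigma> (\<rho> x) = x" and inv2: "\<And>x. \<rho> (\<sigma> x) = x"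
    and memX: "\<And>x. \<rho> x \<in> X \<longleftrightarrow> x \<in> X" and out: "\<And>x. x \<notin> X \<Longrightarrow> \<rho> x = x"
    and X: "X \<subseteq> {1..n}" and src: "sources (n, E) = X"
  shows "sources (n, map_prod \<sigma> \<sigma> ` E) = X"
proof -
  have edge: "(a, v) \<in> map_prod \<sigma> \<sigma> ` E \<longleftrightarrow> (\<rho> a, \<rho> v) \<in> E" for a v
  proof
    assume "(a, v) \<in> map_prod \<sigma> \<sigma> ` E"
    then obtain x y where "(x, y) \<in> E" "a = \<sigma> x" "v = \<sigma> y" by auto
    thus "(\<rho> a, \<rho> v) \<in> E" using inv2 by simp
  next
    assume "(\<rho> a, \<rho> v) \<in> E"
    hence "map_prod \<sigma> \<sigma> (\<rho> a, \<rho> v) \<in> map_prod \<sigma> \<sigma> ` E" by blast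
    thus "(a, v) \<in> map_prod \<sigma> \<sigma> ` E" using inv1 by simp
  qed
  have rng: "\<rho> v \<in> {1..n} \<longleftrightarrow> v \<in> {1..n}" for v
    by (cases "v \<in> X") (metis X subsetD memX, simp add: out)
  have "v \<in> sources (n, map_prod \<sigma> \<sigma> ` E) \<longleftrightarrow> \<rho> v \<in> sources (n, E)" for v
  proof -
    have "(\<forall>a. (a, \<rho> v) \<notin> E) \<longleftrightarrow> (\<forall>a. (\<rho> a, \<rho> v) \<notin> E)"
      by (metis inv2)
    thus ?thesis unfolding sources_def using edge rng by auto
  qed
  thus ?thesis using src memX by auto
qed


lemma map_prod_cancel: "(\<And>x. f (g x) = x) \<Longrightarrow> map_prod f f ` map_prod g g ` E = E"
proof -
  assume h: "\<And>x. f (g x) = x"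
  have e: "(\<lambda>p. map_prod f f (map_prod g g p)) = (\<lambda>p. p)" using h by (auto simp: fun_eq_iff)
  show ?thesis unfolding image_image e by simp
qed

lemma card_map_inj: "inj f \<Longrightarrow> card (map_prod f f ` E) = card E"
  by (meson card_image inj_on_subset prod.inj_map subset_UNIV)

lemma acyclic_map_rev:
  assumes "acyclic (map_prod f f ` E)" shows "acyclic E"
proof -
  have *: "(f x, f y) \<in> (map_prod f f ` E)\<^sup>+" if "(x, y) \<in> E\<^sup>+" for x y
    using that
  proof (induction rule: trancl_induct)
    case (base y) thus ?case by (metis map_prod_imageI r_into_trancl')
  next
    case (step y z) thus ?case by (meson map_prod_imageI trancl.trancl_into_trancl)
  qed
  show ?thesis using assms * unfolding acyclic_def by blast
qed

lemma acyclic_map_iff: "inj f \<Longrightarrow> acyclic (map_prod f f ` E) \<longleftrightarrow> acyclic E"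
  using acyclic_map_rev acyclic_map_inj[of f UNIV E] by auto

lemma finite_sources[simp]: "finite (sources G)"
  by (rule finite_subset[of _ "{1..fst G}"]) (auto simp: sources_def)
lemma sources_sub: "sources G \<subseteq> {1..fst G}"
  by (auto simp: sources_def)

lemma sources_insert_vertex:
  assumes "1 \<le> j" "j \<le> fst G1 + 1"
  shows "sources (insert_vertex G1 j) = insert j (shift_lbl j ` sources G1)"
proof -
  obtain n1 E1 where G1: "G1 = (n1, E1)" by fastforce
  have edge: "(a, v) \<in> map_prod (shift_lbl j) (shift_lbl j) ` E1 \<longleftrightarrow> v \<noteq> j \<and> a \<noteq> j \<and> (unshift j a, unshift j v) \<in> E1" for a v
  proof
    assume "(a, v) \<in> map_prod (shift_lbl j) (shift_lbl j) ` E1"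
    then obtain x y where "(x, y) \<in> E1" "a = shift_lbl j x" "v = shift_lbl j y" by auto
    thus "v \<noteq> j \<and> a \<noteq> j \<and> (unshift j a, unshift j v) \<in> E1" by simp
  next
    assume h: "v \<noteq> j \<and> a \<noteq> j \<and> (unshift j a, unshift j v) \<in> E1"
    hence "map_prod (shift_lbl j) (shift_lbl j) (unshift j a, unshift j v) \<in> map_prod (shift_lbl j) (shift_lbl j) ` E1" by blast
    thus "(a, v) \<in> map_prod (shift_lbl j) (shift_lbl j) ` E1" using h by (simp add: shift_unshift)
  qed
  have rng: "v \<noteq> j \<Longrightarrow> v \<in> {1..n1+1} \<longleftrightarrow> unshift j v \<in> {1..n1}" for v
    using assms G1 by (auto simp: unshift_def)
  show ?thesis
  proof (intro equalityI subsetI)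
    fix v assume v: "v \<in> sources (insert_vertex G1 j)"
    show "v \<in> insert j (shift_lbl j ` sources G1)"
    proof (cases "v = j")
      case False
      have "unshift j v \<in> sources G1"
      proof -
        have "\<forall>a. a = j \<or> (unshift j a, unshift j v) \<notin> E1"
          using v False edge by (simp add: sources_def insert_vertex_def G1)
        hence "\<forall>a. (a, unshift j v) \<notin> E1" by (metis shift_ne unshift_shift)
        moreover have "unshift j v \<in> {1..n1}" using v rng[OF False] by (simp add: sources_def insert_vertex_def G1)
        ultimately show ?thesis by (simp add: sources_def G1)
      qed
      moreover have "v = shift_lbl j (unshift j v)" using False by (simp add: shift_unshift)
      ultimately show ?thesis by blast
    qed simp
  next
    fix v assume v: "v \<in> insert j (shift_lbl j ` sources G1)"
    show "v \<in> sources (insert_vertex G1 j)"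
    proof (cases "v = j")
      case True thus ?thesis using assms edge by (simp add: sources_def insert_vertex_def G1)
    next
      case False
      then obtain y where y: "y \<in> sources G1" "v = shift_lbl j y" using v by auto
      hence "unshift j v = y" by simp
      thus ?thesis using y False edge rng[OF False] by (auto simp: sources_def insert_vertex_def G1)
    qed
  qed
qed

definition ls_of :: "ldg \<Rightarrow> nat list" where "ls_of H = sorted_list_of_set (sources H)"
definition inv_H :: "ldg \<Rightarrow> nat \<Rightarrow> ldg" where
  "inv_H H j = (fst H - 1, map_prod (unshift j) (unshift j) `
      map_prod (cinv (ls_of H) (list_idx (ls_of H) j)) (cinv (ls_of H) (list_idx (ls_of H) j)) ` snd H)"

lemma ls_of_facts: "distinct (ls_of H)" "set (ls_of H) = sources H"
  by (auto simp: ls_of_def)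

lemma Min_ls: "sources H \<noteq> {} \<Longrightarrow> ls_of H ! 0 = Min (sources H)"
  unfolding ls_of_def by (subst sorted_list_of_set_nonempty) auto

context
  fixes G1 :: ldg and j :: nat
  assumes j: "1 \<le> j" "j \<le> fst G1 + 1"
begin

definition "H0 = insert_vertex G1 j"
definition "lsj = sorted_list_of_set (sources H0)"
definition "rj = list_idx lsj j"

lemma H0_src: "sources H0 = insert j (shift_lbl j ` sources G1)"
  unfolding H0_def by (rule sources_insert_vertex[OF j])

lemma lsj_facts: "distinct lsj" "set lsj = sources H0" "j \<in> set lsj" "rj < length lsj" "lsj ! rj = j"
proof -
  show d: "distinct lsj" "set lsj = sources H0" by (auto simp: lsj_def)
  show jin: "j \<in> set lsj" using d H0_src by simp
  show "rj < length lsj" "lsj ! rj = j" using list_idx_in[OF jin d(1)] by (auto simp: rj_def)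
qed

lemma fin_eq: "finalize G1 j = (fst G1 + 1, map_prod (cyc_perm lsj rj) (cyc_perm lsj rj) ` snd H0)"
  by (simp add: finalize_def Let_def H0_def[symmetric] lsj_def rj_def) (simp add: insert_vertex_def H0_def)

lemma H0_eq: "H0 = (fst G1 + 1, map_prod (shift_lbl j) (shift_lbl j) ` snd G1)"
  by (simp add: H0_def insert_vertex_def)

lemma fin_src: "sources (finalize G1 j) = sources H0"
proof -
  have "sources (fst G1 + 1, snd H0) = sources H0" by (simp add: H0_eq)
  moreover have "sources H0 \<subseteq> {1..fst G1 + 1}" using sources_sub[of H0] by (simp add: H0_eq)
  ultimately show ?thesis unfolding fin_eq
    using lsj_facts(1,2,4)
    by (intro perm_sources[where \<rho> = "cinv lsj rj"])
       (auto simp: cinv_mem_iff cinv_out)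
qed

lemma fin_inv: "inv_H (finalize G1 j) j = G1"
proof -
  have ls: "ls_of (finalize G1 j) = lsj" by (simp add: ls_of_def fin_src lsj_def)
  show ?thesis
    unfolding inv_H_def ls rj_def[symmetric]
    using lsj_facts(1,4)
    by (simp add: fin_eq H0_eq map_prod_cancel)
qed

lemma fin_j_src: "j \<in> sources (finalize G1 j)"
  using fin_src lsj_facts by simp

lemma fin_fst: "fst (finalize G1 j) = fst G1 + 1"
  by (simp add: fin_eq)

lemma fin_nedges: "nedges (finalize G1 j) = nedges G1"
  unfolding fin_eq H0_eq nedges_def snd_conv
  by (simp only: card_map_inj[OF inj_cyc[OF lsj_facts(1,4)]] card_map_inj[OF inj_shift])

lemma fin_nsources: "nsources (finalize G1 j) = nsources G1 + 1"
proof -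
  have "card (insert j (shift_lbl j ` sources G1)) = Suc (card (shift_lbl j ` sources G1))"
    by (rule card_insert_disjoint) (simp, metis imageE shift_ne)
  also have "card (shift_lbl j ` sources G1) = card (sources G1)"
    by (meson card_image inj_on_subset inj_shift subset_UNIV)
  finally show ?thesis by (simp add: nsources_def fin_src H0_src)
qed

lemma fin_dag: "is_dag (finalize G1 j) \<longleftrightarrow> is_dag G1"
proof -
  have ac: "acyclic (snd (finalize G1 j)) \<longleftrightarrow> acyclic (snd G1)"
    unfolding fin_eq H0_eq snd_conv
    by (simp only: acyclic_map_iff[OF inj_cyc[OF lsj_facts(1,4)]] acyclic_map_iff[OF inj_shift])
  let ?n = "fst G1 + 1"
  let ?\<sigma> = "cyc_perm lsj rj"
  have srcsub: "set lsj \<subseteq> {1..?n}" using lsj_facts(2) sources_sub[of H0] by (simp add: H0_eq)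
  have \<sigma>rng: "?\<sigma> x \<in> {1..?n} \<longleftrightarrow> x \<in> {1..?n}" for x
    by (cases "x \<in> set lsj") (use cyc_in[OF lsj_facts(1,4)] srcsub in blast, simp add: cyc_out[OF lsj_facts(1,4)])
  have shrng: "shift_lbl j x \<in> {1..?n} \<longleftrightarrow> x \<in> {1..fst G1}" for x
    using j by (auto simp: shift_lbl_def)
  have rng: "snd (finalize G1 j) \<subseteq> {1..?n} \<times> {1..?n} \<longleftrightarrow> snd G1 \<subseteq> {1..fst G1} \<times> {1..fst G1}"
  proof
    assume A: "snd (finalize G1 j) \<subseteq> {1..?n} \<times> {1..?n}"
    show "snd G1 \<subseteq> {1..fst G1} \<times> {1..fst G1}"
    proof (rule subsetI, clarify)
      fix a b assume ab: "(a, b) \<in> snd G1"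
      have "(?\<sigma> (shift_lbl j a), ?\<sigma> (shift_lbl j b)) \<in> snd (finalize G1 j)"
        unfolding fin_eq H0_eq snd_conv using ab by (metis map_prod_imageI)
      with A have "?\<sigma> (shift_lbl j a) \<in> {1..?n}" "?\<sigma> (shift_lbl j b) \<in> {1..?n}" by blast+
      hence "a \<in> {1..fst G1}" "b \<in> {1..fst G1}" using \<sigma>rng shrng by blast+
      thus "a \<in> {1..fst G1} \<and> b \<in> {1..fst G1}" by blast
    qed
  next
    assume B: "snd G1 \<subseteq> {1..fst G1} \<times> {1..fst G1}"
    show "snd (finalize G1 j) \<subseteq> {1..?n} \<times> {1..?n}"
    proof
      fix p assume "p \<in> snd (finalize G1 j)"
      then obtain a b where ab: "(a, b) \<in> snd G1" "p = (?\<sigma> (shift_lbl j a), ?\<sigma> (shift_lbl j b))"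
        unfolding fin_eq H0_eq snd_conv by auto
      have "a \<in> {1..fst G1}" "b \<in> {1..fst G1}" using ab B by blast+
      hence "?\<sigma> (shift_lbl j a) \<in> {1..?n}" "?\<sigma> (shift_lbl j b) \<in> {1..?n}" using \<sigma>rng shrng by blast+
      thus "p \<in> {1..?n} \<times> {1..?n}" using ab by blast
    qed
  qed
  show ?thesis unfolding is_dag_def using ac rng by (simp add: fin_fst)
qed

lemma fin_H: "is_dag G1 \<Longrightarrow> is_H (finalize G1 j)"
proof -
  assume d: "is_dag G1"
  let ?\<sigma> = "cyc_perm lsj rj"
  have "sources (finalize G1 j) \<noteq> {}" using fin_j_src by auto
  hence "Min (sources (finalize G1 j)) = lsj ! 0"
    using Min_ls[of "finalize G1 j"] by (simp add: ls_of_def fin_src lsj_def)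
  also have "\<dots> = ?\<sigma> j" using lsj_facts cyc_r0 by metis
  finally have m: "Min (sources (finalize G1 j)) = ?\<sigma> j" .
  have iso: "(a, ?\<sigma> j) \<notin> snd (finalize G1 j) \<and> (?\<sigma> j, a) \<notin> snd (finalize G1 j)" for a
  proof (intro conjI notI)
    assume "(a, ?\<sigma> j) \<in> snd (finalize G1 j)"
    then obtain x y where "(x, y) \<in> snd G1" "?\<sigma> j = ?\<sigma> (shift_lbl j y)"
      unfolding fin_eq H0_eq snd_conv by auto
    hence "j = shift_lbl j y" using inj_cyc[OF lsj_facts(1,4)] by (metis injD)
    thus False by (metis shift_ne)
  next
    assume "(?\<sigma> j, a) \<in> snd (finalize G1 j)"
    then obtain x y where "(x, y) \<in> snd G1" "?\<sigma> j = ?\<sigma> (shift_lbl j x)"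
      unfolding fin_eq H0_eq snd_conv by auto
    hence "j = shift_lbl j x" using inj_cyc[OF lsj_facts(1,4)] by (metis injD)
    thus False by (metis shift_ne)
  qed
  show ?thesis unfolding is_H_def using fin_dag d m iso by (simp add: fin_fst)
qed

end

lemma inv_fin:
  assumes H: "is_H H" and jH: "j \<in> sources H"
  shows "1 \<le> j" "j \<le> fst (inv_H H j) + 1" "finalize (inv_H H j) j = H"
proof -
  obtain n E where HE: "H = (n, E)" by fastforce
  have n1: "n \<ge> 1" and Esub: "E \<subseteq> {1..n} \<times> {1..n}" using H by (auto simp: is_H_def is_dag_def HE)
  have jr: "j \<in> {1..n}" using jH sources_sub[of H] HE by auto
  show "1 \<le> j" using jr by simp
  show jle: "j \<le> fst (inv_H H j) + 1" using jr n1 by (simp add: inv_H_def HE)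
  define ls where "ls = ls_of H"
  define r where "r = list_idx ls j"
  have lsf: "distinct ls" "set ls = sources H" using ls_of_facts ls_def by auto
  have r: "r < length ls" "ls ! r = j" using list_idx_in[of j ls] lsf jH by (auto simp: r_def)
  let ?\<rho> = "cinv ls r" and ?\<sigma> = "cyc_perm ls r"
  define E0 where "E0 = map_prod ?\<rho> ?\<rho> ` E"
  have ne: "sources H \<noteq> {}" using jH by auto
  have m: "Min (sources H) = ls ! 0" using Min_ls[OF ne] ls_def by simp
  have miso: "\<forall>a. (a, ls ! 0) \<notin> E \<and> (ls ! 0, a) \<notin> E" using H m by (simp add: is_H_def HE)
  have \<rho>m: "?\<rho> (ls ! 0) = j" using cinv_0[OF lsf(1) r(1)] r by simp
  have jiso: "(a, b) \<in> E0 \<Longrightarrow> a \<noteq> j \<and> b \<noteq> j" for a b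
  proof -
    assume "(a, b) \<in> E0"
    then obtain x y where xy: "(x, y) \<in> E" "a = ?\<rho> x" "b = ?\<rho> y" by (auto simp: E0_def)
    have "x \<noteq> ls ! 0" "y \<noteq> ls ! 0" using xy miso by auto
    thus ?thesis using xy \<rho>m inj_cinv[OF lsf(1) r(1)] by (metis injD)
  qed
  have G1: "inv_H H j = (n - 1, map_prod (unshift j) (unshift j) ` E0)"
    unfolding inv_H_def E0_def r_def ls_def HE by simp
  have H0: "insert_vertex (inv_H H j) j = (n, E0)"
  proof -
    have "map_prod (shift_lbl j) (shift_lbl j) ` map_prod (unshift j) (unshift j) ` E0 = E0"
    proof -
      have "\<forall>p\<in>E0. map_prod (shift_lbl j) (shift_lbl j) (map_prod (unshift j) (unshift j) p) = p"
        using jiso by (auto simp: shift_unshift)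
      thus ?thesis by (simp add: image_image)
    qed
    thus ?thesis using n1 by (simp add: insert_vertex_def G1)
  qed
  have srcE0: "sources (n, E0) = sources H"
    unfolding E0_def HE using lsf r sources_sub[of H] HE
    by (intro perm_sources[where \<rho> = "?\<sigma>"]) (auto simp: cyc_mem_iff cyc_out)
  have lsE0: "ls_of (n, E0) = ls" using srcE0 ls_def by (simp add: ls_of_def)
  have "finalize (inv_H H j) j = (n, map_prod ?\<sigma> ?\<sigma> ` E0)"
    by (simp add: finalize_def Let_def H0 ls_of_def[symmetric] lsE0 r_def)
  also have "\<dots> = H" using lsf r by (simp add: E0_def HE map_prod_cancel)
  finally show "finalize (inv_H H j) j = H" .
qed


definition Qf :: "real \<Rightarrow> nat \<Rightarrow> real" where "Qf w n = (1 + w) ^ (n choose 2) * fact n"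

lemma Qf_pos: "0 \<le> w \<Longrightarrow> Qf w n > 0"
  by (simp add: Qf_def)

lemma choose2_add: "((a + b) choose 2) = (a choose 2) + (b choose 2) + a * b"
proof (induction b)
  case 0 thus ?case by simp
next
  case (Suc b)
  have e: "Suc m choose 2 = m + (m choose 2)" for m
    using binomial_Suc_Suc[of m 1] by (simp add: numeral_2_eq_2)
  show ?case using Suc by (simp add: e)
qed

lemma choose2_split: "a \<le> n \<Longrightarrow> (n choose 2) = (a choose 2) + ((n - a) choose 2) + a * (n - a)"
  using choose2_add[of a "n - a"] by simp

lemma coeff_id:
  assumes "a \<le> n" "0 \<le> w"
  shows "of_nat (n choose a) * (1 + w) ^ (a * (n - a)) / Qf w n = 1 / (Qf w a * Qf w (n - a))"
proof -
  have "Qf w n = (1 + w) ^ (a choose 2) * (1 + w) ^ ((n - a) choose 2) * (1 + w) ^ (a * (n - a)) * fact n"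
    unfolding Qf_def using choose2_split[OF assms(1)] by (simp add: power_add)
  moreover have "of_nat (n choose a) = (fact n :: real) / (fact a * fact (n - a))"
    using binomial_fact[OF assms(1)] by simp
  ultimately show ?thesis using assms by (simp add: Qf_def field_simps)
qed

lemma DAG_terms_eq: "DAG_terms x w t n = x ^ n * Apoly w t n / Qf w n"
proof -
  have "DAG_terms x w t n = (\<Sum>G\<in>dags_of_size n. x ^ n * (w ^ nedges G * t ^ nsources G) / Qf w n)"
    unfolding DAG_terms_def weight_def
    by (intro sum.cong refl) (simp add: dags_of_size_def nverts_def Qf_def mult.assoc)
  also have "\<dots> = x ^ n * Apoly w t n / Qf w n"
    unfolding Apoly_def by (simp add: sum_distrib_left sum_divide_distrib)
  finally show ?thesis .
qed

lemma DAG_terms_conv: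
  assumes "0 \<le> w"
  shows "DAG_terms x w t n = (\<Sum>a\<le>n. ((t - 1) * x) ^ a / Qf w a * DAG_terms x w 1 (n - a))"
proof -
  have "DAG_terms x w t n = (\<Sum>a\<le>n. x ^ n * (of_nat (n choose a) * (t - 1) ^ a * (1 + w) ^ (a * (n - a)) * Apoly w 1 (n - a)) / Qf w n)"
    unfolding DAG_terms_eq by (subst Apoly_CI) (simp add: sum_distrib_left sum_divide_distrib)
  also have "\<dots> = (\<Sum>a\<le>n. ((t - 1) * x) ^ a / Qf w a * DAG_terms x w 1 (n - a))"
  proof (intro sum.cong refl)
    fix a assume a: "a \<in> {..n}"
    have xn: "x ^ n = x ^ a * x ^ (n - a)" using a by (simp flip: power_add)
    have "x ^ n * (of_nat (n choose a) * (t - 1) ^ a * (1 + w) ^ (a * (n - a)) * Apoly w 1 (n - a)) / Qf w n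
        = x ^ n * (t - 1) ^ a * Apoly w 1 (n - a) * (of_nat (n choose a) * (1 + w) ^ (a * (n - a)) / Qf w n)"
      by (simp add: field_simps)
    also have "\<dots> = x ^ n * (t - 1) ^ a * Apoly w 1 (n - a) / (Qf w a * Qf w (n - a))"
      using a assms by (subst coeff_id) auto
    also have "\<dots> = ((t - 1) * x) ^ a / Qf w a * DAG_terms x w 1 (n - a)"
      unfolding DAG_terms_eq xn by (simp add: power_mult_distrib mult_ac)
    finally show "x ^ n * (of_nat (n choose a) * (t - 1) ^ a * (1 + w) ^ (a * (n - a)) * Apoly w 1 (n - a)) / Qf w n
        = ((t - 1) * x) ^ a / Qf w a * DAG_terms x w 1 (n - a)" .
  qed
  finally show ?thesis .
qed


lemma SetF_eq: "SetF y w = (\<Sum>n. y ^ n / Qf w n)"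
  unfolding SetF_def Qf_def by (rule refl)

lemma Set_abs_summable:
  assumes "0 \<le> w" shows "summable (\<lambda>n. norm (y ^ n / Qf w n))"
proof (rule summable_comparison_test[where g = "\<lambda>n. inverse (fact n) * \<bar>y\<bar> ^ n"])
  show "summable (\<lambda>n. inverse (fact n) * \<bar>y\<bar> ^ n)" by (rule summable_exp)
  show "\<exists>N. \<forall>n\<ge>N. norm (norm (y ^ n / Qf w n)) \<le> inverse (fact n) * \<bar>y\<bar> ^ n"
  proof (intro exI allI impI)
    fix n :: nat
    have q0: "0 < Qf w n" using Qf_pos[OF assms] .
    have "1 * fact n \<le> (1 + w) ^ (n choose 2) * (fact n :: real)"
      using assms by (intro mult_right_mono one_le_power) auto
    hence q: "fact n \<le> Qf w n" unfolding Qf_def by simp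
    have "norm (norm (y ^ n / Qf w n)) = \<bar>y\<bar> ^ n / Qf w n"
      using q0 by (simp add: power_abs)
    also have "\<dots> \<le> \<bar>y\<bar> ^ n / fact n"
      using q q0 by (intro divide_left_mono) auto
    also have "\<dots> = inverse (fact n) * \<bar>y\<bar> ^ n" by (simp add: divide_inverse mult.commute)
    finally show "norm (norm (y ^ n / Qf w n)) \<le> inverse (fact n) * \<bar>y\<bar> ^ n" .
  qed
qed

lemma Set_summable: "0 \<le> w \<Longrightarrow> summable (\<lambda>n. y ^ n / Qf w n)"
  by (rule summable_norm_cancel[OF Set_abs_summable])

lemma Apoly_nonneg: "0 \<le> w \<Longrightarrow> 0 \<le> t \<Longrightarrow> 0 \<le> Apoly w t n"
  unfolding Apoly_def by (intro sum_nonneg) auto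

lemma DAG_nonneg: "0 \<le> w \<Longrightarrow> 0 \<le> t \<Longrightarrow> 0 \<le> x \<Longrightarrow> 0 \<le> DAG_terms x w t n"
  unfolding DAG_terms_eq by (intro divide_nonneg_pos mult_nonneg_nonneg zero_le_power Apoly_nonneg Qf_pos)

lemma DAG_prod:
  assumes w: "0 \<le> w" and x: "0 \<le> x" and s: "summable (DAG_terms x w 1)"
  shows "DAG_terms x w t sums (SetF ((t - 1) * x) w * DAGgf x w 1)"
proof -
  have s': "summable (\<lambda>n. norm (DAG_terms x w 1 n))"
    using s DAG_nonneg[OF w _ x, of 1] by simp
  have "(\<lambda>k. \<Sum>i\<le>k. ((t - 1) * x) ^ i / Qf w i * DAG_terms x w 1 (k - i)) sums
        ((\<Sum>k. ((t - 1) * x) ^ k / Qf w k) * (\<Sum>k. DAG_terms x w 1 k))"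
    by (rule Cauchy_product_sums[OF Set_abs_summable[OF w] s'])
  moreover have "(\<lambda>k. \<Sum>i\<le>k. ((t - 1) * x) ^ i / Qf w i * DAG_terms x w 1 (k - i)) = DAG_terms x w t"
    by (rule ext) (rule DAG_terms_conv[OF w, symmetric])
  ultimately show ?thesis unfolding DAGgf_def SetF_eq by simp
qed

lemma dags0: "dags_of_size 0 = {(0, {})}"
proof -
  have "dagsOn {1..0::nat} = {{}}" unfolding dagsOn_def by (auto simp: acyclic_def)
  thus ?thesis by (simp add: dags_of_size_eq)
qed

lemma dag_has_source:
  assumes "is_dag G" "fst G > 0" shows "sources G \<noteq> {}"
proof -
  obtain n E where G: "G = (n, E)" by fastforce
  have E: "E \<subseteq> {1..n} \<times> {1..n}" "acyclic E" using assms G by (auto simp: is_dag_def)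
  have "finite E" using E(1) by (rule finite_subset) auto
  hence wf: "wf E" using E(2) by (rule finite_acyclic_wf)
  have one: "1 \<in> {1..n}" using assms G by simp
  obtain v where v: "v \<in> {1..n}" "\<And>y. (y, v) \<in> E \<Longrightarrow> y \<notin> {1..n}"
    by (rule wfE_min[OF wf one]) blast
  have "\<forall>a. (a, v) \<notin> E"
  proof (intro allI notI)
    fix a assume a: "(a, v) \<in> E"
    hence "a \<in> {1..n}" using E(1) by blast
    thus False using v(2)[OF a] by blast
  qed
  hence "v \<in> sources G" using v(1) by (simp add: sources_def G)
  thus ?thesis by auto
qed

lemma Apoly0: "Apoly w 0 n = (if n = 0 then 1 else 0)"
proof (cases "n = 0")
  case True thus ?thesis by (simp add: Apoly_def dags0 nedges_def nsources_def sources_def)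
next
  case False
  have "nsources G \<noteq> 0" if "G \<in> dags_of_size n" for G
    using dag_has_source[of G] that False by (auto simp: dags_of_size_def nsources_def)
  hence "Apoly w 0 n = 0" unfolding Apoly_def by (intro sum.neutral) auto
  thus ?thesis using False by simp
qed

lemma Apoly_at0: "Apoly w t 0 = 1"
  by (simp add: Apoly_def dags0 nedges_def nsources_def sources_def)

lemma DAG_terms0: "DAG_terms x w t 0 = 1"
  by (simp add: DAG_terms_eq Apoly_at0 Qf_def numeral_2_eq_2)

lemma DAGgf_at0: "DAGgf x w 0 = 1"
proof -
  have "DAG_terms x w 0 = (\<lambda>n. if n = 0 then 1 else 0)"
    by (auto simp: fun_eq_iff DAG_terms_eq Apoly0 Qf_def numeral_2_eq_2)
  moreover have "(\<lambda>n::nat. if n = 0 then 1 else (0::real)) sums 1"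
    using sums_single[of 0 "\<lambda>_. 1::real"] by simp
  ultimately show ?thesis unfolding DAGgf_def by (simp add: sums_iff)
qed

lemma DAGgf_ge1:
  assumes "0 \<le> w" "0 \<le> t" "0 \<le> x" "summable (DAG_terms x w t)"
  shows "1 \<le> DAGgf x w t"
proof -
  have "sum (DAG_terms x w t) {0} \<le> suminf (DAG_terms x w t)"
    using assms DAG_nonneg by (intro sum_le_suminf) auto
  thus ?thesis by (simp add: DAGgf_def DAG_terms0)
qed


definition cA :: "real \<Rightarrow> real \<Rightarrow> real fps" where "cA w t = Abs_fps (\<lambda>n. Apoly w t n / Qf w n)"
definition cS :: "real \<Rightarrow> real \<Rightarrow> real fps" where "cS w v = Abs_fps (\<lambda>n. v ^ n / Qf w n)"
definition fsc :: "real \<Rightarrow> real fps \<Rightarrow> real fps" where "fsc d f = Abs_fps (\<lambda>n. d ^ n * fps_nth f n)"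

lemma cA_mult: "0 \<le> w \<Longrightarrow> cA w t = cS w (t - 1) * cA w 1"
proof (rule fps_ext)
  fix n assume w: "0 \<le> w"
  have "fps_nth (cA w t) n = DAG_terms 1 w t n" by (simp add: cA_def DAG_terms_eq)
  also have "\<dots> = (\<Sum>a\<le>n. (t - 1) ^ a / Qf w a * DAG_terms 1 w 1 (n - a))"
    using DAG_terms_conv[OF w, of 1 t n] by simp
  also have "\<dots> = fps_nth (cS w (t - 1) * cA w 1) n"
    by (simp add: fps_mult_nth cA_def cS_def DAG_terms_eq atLeast0AtMost)
  finally show "fps_nth (cA w t) n = fps_nth (cS w (t - 1) * cA w 1) n" .
qed

lemma cA0: "cA w 0 = 1"
  by (rule fps_ext) (simp add: cA_def Apoly0 Qf_def numeral_2_eq_2)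

lemma fsc_mult: "fsc d (f * g) = fsc d f * fsc d g"
proof (rule fps_ext)
  fix n
  have "fps_nth (fsc d f * fsc d g) n = (\<Sum>i=0..n. d ^ n * (fps_nth f i * fps_nth g (n - i)))"
    by (auto simp: fps_mult_nth fsc_def intro!: sum.cong simp flip: power_add)
  thus "fps_nth (fsc d (f * g)) n = fps_nth (fsc d f * fsc d g) n"
    by (simp add: fsc_def fps_mult_nth sum_distrib_left)
qed

lemma fsc_one: "fsc d 1 = 1"
  by (rule fps_ext) (simp add: fsc_def)

lemma cS_scale: "cS w (- d) = fsc d (cS w (-1))"
  by (rule fps_ext) (simp add: cS_def fsc_def power_minus')

lemma key_fps:
  assumes w: "0 \<le> w"
  shows "cA w u * fsc (1 - u) (cA w 1) = cA w 1"
proof -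
  have "cA w u * fsc (1 - u) (cA w 1) = cS w (u - 1) * cA w 1 * fsc (1 - u) (cA w 1)"
    using cA_mult[OF w, of u] by simp
  also have "cS w (u - 1) = fsc (1 - u) (cS w (-1))"
    using cS_scale[of w "1 - u"] by simp
  also have "fsc (1 - u) (cS w (-1)) * cA w 1 * fsc (1 - u) (cA w 1)
      = cA w 1 * fsc (1 - u) (cS w (-1) * cA w 1)"
    by (simp add: fsc_mult algebra_simps)
  also have "cS w (-1) * cA w 1 = 1"
    using cA_mult[OF w, of 0] cA0 by simp
  finally show ?thesis by (simp add: fsc_one)
qed

lemma fps_prod_summable:
  fixes f g :: "real fps"
  assumes "\<And>n. 0 \<le> fps_nth f n" "\<And>n. 0 \<le> fps_nth g n" "0 \<le> y"
    and "summable (\<lambda>n. fps_nth f n * y ^ n)" "summable (\<lambda>n. fps_nth g n * y ^ n)"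
  shows "summable (\<lambda>n. fps_nth (f * g) n * y ^ n)"
proof -
  have "(\<lambda>k. \<Sum>i\<le>k. (fps_nth f i * y ^ i) * (fps_nth g (k - i) * y ^ (k - i))) sums
        ((\<Sum>k. fps_nth f k * y ^ k) * (\<Sum>k. fps_nth g k * y ^ k))"
    using assms by (intro Cauchy_product_sums) auto
  moreover have "(\<Sum>i\<le>k. (fps_nth f i * y ^ i) * (fps_nth g (k - i) * y ^ (k - i))) = fps_nth (f * g) k * y ^ k" for k
    by (auto simp: fps_mult_nth atLeast0AtMost sum_distrib_right intro!: sum.cong
             simp flip: power_add)
  ultimately show ?thesis by (simp add: sums_summable)
qed

lemma Apoly_mono_u:
  assumes "0 \<le> w" "0 < u" "u \<le> 1"
  shows "Apoly w 1 n * u ^ n \<le> Apoly w u n"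
proof -
  have "Apoly w 1 n * u ^ n = (\<Sum>G\<in>dags_of_size n. w ^ nedges G * u ^ n)"
    by (simp add: Apoly_def sum_distrib_right)
  also have "\<dots> \<le> Apoly w u n" unfolding Apoly_def
  proof (intro sum_mono mult_left_mono)
    fix G assume G: "G \<in> dags_of_size n"
    have "nsources G \<le> n"
      using G card_mono[OF _ sources_sub[of G]] by (auto simp: dags_of_size_def nsources_def)
    thus "u ^ n \<le> u ^ nsources G" using assms by (intro power_decreasing) auto
  qed (use assms in auto)
  finally show ?thesis .
qed

lemma D1_summable:
  assumes w: "0 \<le> w" and x: "0 \<le> x" and u: "0 < u" "u < 1"
    and su: "summable (DAG_terms x w u)"
  shows "summable (DAG_terms x w 1)"
proof -
  define d where "d = 1 - u"
  have d: "0 < d" "d < 1" using u by (auto simp: d_def)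
  have DT: "DAG_terms y w t n = fps_nth (cA w t) n * y ^ n" for y t n
    by (simp add: DAG_terms_eq cA_def)
  have cA_nn: "0 \<le> fps_nth (cA w t) n" if "0 \<le> t" for t n
    unfolding cA_def fps_nth_Abs_fps by (intro divide_nonneg_pos Apoly_nonneg[OF w that] Qf_pos[OF w])
  have su_le: "summable (\<lambda>n. fps_nth (cA w u) n * y ^ n)" if "0 \<le> y" "y \<le> x" for y
  proof (rule summable_comparison_test[OF _ su])
    show "\<exists>N. \<forall>n\<ge>N. norm (fps_nth (cA w u) n * y ^ n) \<le> DAG_terms x w u n"
      using that cA_nn[of u] u unfolding DT
      by (auto intro!: mult_left_mono power_mono)
  qed
  obtain N where N: "d ^ N < u" using real_arch_pow_inv[OF u(1) d(2)] by blast
  define P where "P m \<longleftrightarrow> summable (\<lambda>n. fps_nth (cA w 1) n * (d ^ m * x) ^ n)" for m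
  have PN: "P N" unfolding P_def
  proof (rule summable_comparison_test[OF _ su])
    show "\<exists>Na. \<forall>n\<ge>Na. norm (fps_nth (cA w 1) n * (d ^ N * x) ^ n) \<le> DAG_terms x w u n"
    proof (intro exI allI impI)
      fix n :: nat
      have "fps_nth (cA w 1) n * (d ^ N * x) ^ n \<le> fps_nth (cA w 1) n * (u * x) ^ n"
        using cA_nn[of 1] N d x by (intro mult_left_mono power_mono mult_right_mono) auto
      also have "\<dots> = (Apoly w 1 n * u ^ n) * x ^ n / Qf w n"
        by (simp add: cA_def power_mult_distrib)
      also have "\<dots> \<le> Apoly w u n * x ^ n / Qf w n"
        using Apoly_mono_u[OF w u(1)] u Qf_pos[OF w, of n] x
        by (intro divide_right_mono mult_right_mono) auto
      also have "\<dots> = DAG_terms x w u n" by (simp add: DAG_terms_eq)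
      finally show "norm (fps_nth (cA w 1) n * (d ^ N * x) ^ n) \<le> DAG_terms x w u n"
        using cA_nn[of 1] d x by simp
    qed
  qed
  have step: "P m" if "P (Suc m)" for m
  proof -
    have dm: "d ^ m \<le> 1" using d by (intro power_le_one) auto
    have y: "0 \<le> d ^ m * x" "d ^ m * x \<le> x"
      using d x dm mult_left_le_one_le[of x "d ^ m"] by auto
    have s1: "summable (\<lambda>n. fps_nth (cA w u) n * (d ^ m * x) ^ n)" using su_le y by blast
    have s2: "summable (\<lambda>n. fps_nth (fsc d (cA w 1)) n * (d ^ m * x) ^ n)"
      using that unfolding P_def by (simp add: fsc_def power_mult_distrib mult_ac)
    have "summable (\<lambda>n. fps_nth (cA w u * fsc d (cA w 1)) n * (d ^ m * x) ^ n)"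
      using cA_nn u d s1 s2 y by (intro fps_prod_summable) (auto simp: fsc_def)
    thus ?thesis unfolding P_def d_def using key_fps[OF w, of u] by simp
  qed
  have "P (N - k)" if "k \<le> N" for k
    using that
  proof (induction k)
    case 0 thus ?case using PN by simp
  next
    case (Suc k)
    hence "P (Suc (N - Suc k))" by (simp add: Suc_diff_Suc)
    thus ?case by (rule step)
  qed
  hence "P 0" by (metis diff_self_eq_0 order_refl)
  moreover have "DAG_terms x w 1 = (\<lambda>n. fps_nth (cA w 1) n * x ^ n)" using DT by (simp add: fun_eq_iff)
  ultimately show ?thesis unfolding P_def by simp
qed


lemma choose2_Suc: "Suc m choose 2 = m + (m choose 2)"
  using binomial_Suc_Suc[of m 1] by (simp add: numeral_2_eq_2)

lemma SetF_deriv: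
  assumes w: "0 \<le> w"
  shows "((\<lambda>y. SetF y w) has_field_derivative SetF (y / (1 + w)) w) (at y)"
proof -
  define c where "c n = 1 / Qf w n" for n
  have fn: "(\<lambda>y. SetF y w) = (\<lambda>y. \<Sum>n. c n * y ^ n)"
    by (simp add: fun_eq_iff SetF_eq c_def)
  have sm: "summable (\<lambda>n. c n * y ^ n)" for y
    using Set_summable[OF w, of y] by (simp add: c_def)
  have d: "diffs c n * y ^ n = (y / (1 + w)) ^ n / Qf w n" for n
  proof -
    have q: "Qf w (Suc n) = of_nat (Suc n) * ((1 + w) ^ n * Qf w n)"
      by (simp add: Qf_def choose2_Suc power_add mult_ac)
    have p: "0 < (1 + w) ^ n" "0 < Qf w n" using w Qf_pos[OF w] by auto
    have "diffs c n * y ^ n = of_nat (Suc n) * (1 / (of_nat (Suc n) * ((1 + w) ^ n * Qf w n))) * y ^ n"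
      by (simp add: diffs_def c_def q)
    also have "\<dots> = y ^ n / ((1 + w) ^ n * Qf w n)"
    proof -
      have "real (Suc n) \<noteq> 0" by simp
      thus ?thesis using p by (simp del: of_nat_Suc add: field_simps)
    qed
    also have "\<dots> = (y / (1 + w)) ^ n / Qf w n"
      by (simp add: power_divide)
    finally show ?thesis .
  qed
  have "((\<lambda>y. \<Sum>n. c n * y ^ n) has_field_derivative (\<Sum>n. diffs c n * y ^ n)) (at y)"
    by (rule termdiffs_strong_converges_everywhere[OF sm])
  thus ?thesis unfolding fn d by (simp add: SetF_eq)
qed

lemma SetF_cont: "0 \<le> w \<Longrightarrow> isCont (\<lambda>y. SetF y w) y"
  using SetF_deriv DERIV_isCont by blast

context
  fixes z w u :: real
  assumes z: "z > 0" and w: "w > 0" and u: "u > 0"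
    and sDAG: "\<And>t. t \<in> {0..u} \<Longrightarrow> summable (DAG_terms (z / (1 + w)) w t)"
begin

definition "x0 = z / (1 + w)"
definition "KK = DAGgf x0 w 1"
definition "FF t = SetF ((t - 1) * z) w - SetF (- z) w"

lemma x0_pos: "0 < x0" using z w by (simp add: x0_def)

lemma D1s: "summable (DAG_terms x0 w 1)"
proof (cases "u \<ge> 1")
  case True thus ?thesis using sDAG[of 1] by (simp add: x0_def)
next
  case False
  thus ?thesis using D1_summable[of w x0 u] sDAG[of u] w x0_pos u by (simp add: x0_def)
qed

lemma DAGgf_eq: "DAGgf x0 w t = SetF ((t - 1) * x0) w * KK"
  using DAG_prod[OF _ _ D1s, of t] w x0_pos by (simp add: KK_def sums_iff DAGgf_def)

lemma KK_ge1: "1 \<le> KK"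
  unfolding KK_def using DAGgf_ge1[OF _ _ _ D1s] w x0_pos by simp

lemma Set_pos: "t \<in> {0..u} \<Longrightarrow> 0 < SetF ((t - 1) * x0) w"
proof -
  assume t: "t \<in> {0..u}"
  have "1 \<le> DAGgf x0 w t" using DAGgf_ge1[of w t x0] sDAG[OF t] w x0_pos t by (simp add: x0_def)
  hence "0 < SetF ((t - 1) * x0) w * KK" using DAGgf_eq by simp
  thus ?thesis using KK_ge1 by (simp add: zero_less_mult_iff)
qed

lemma FF_deriv: "(FF has_real_derivative z * SetF ((t - 1) * x0) w) (at t)"
proof -
  have "((\<lambda>t. SetF ((t - 1) * z) w) has_real_derivative SetF ((t - 1) * z / (1 + w)) w * z) (at t)"
    using w by (intro DERIV_chain2[OF SetF_deriv]) (auto intro!: derivative_eq_intros)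
  hence "(FF has_real_derivative SetF ((t - 1) * z / (1 + w)) w * z) (at t)"
    unfolding FF_def[abs_def] by (auto intro!: derivative_eq_intros)
  thus ?thesis by (simp add: x0_def mult.commute)
qed

lemma FF_cont: "continuous_on S FF"
  using FF_deriv DERIV_isCont continuous_at_imp_continuous_on by blast

lemma FF_mono:
  assumes "0 \<le> a" "a < b" "b \<le> u" shows "FF a < FF b"
proof (rule DERIV_pos_imp_increasing[of a b FF])
  show "a < b" by fact
  fix x assume "a \<le> x" "x \<le> b"
  hence x: "x \<in> {0..u}" using assms by auto
  show "\<exists>y. (FF has_real_derivative y) (at x) \<and> 0 < y"
    using FF_deriv[of x] Set_pos[OF x] z by (intro exI[of _ "z * SetF ((x - 1) * x0) w"]) simp
qed

lemma FF0: "FF 0 = 0" by (simp add: FF_def)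

lemma FFu: "0 < FF u" using FF_mono[of 0 u] u FF0 by simp

definition "gg t = FF t / FF u"

lemma gg_mono: "0 \<le> a \<Longrightarrow> a < b \<Longrightarrow> b \<le> u \<Longrightarrow> gg a < gg b"
  using FF_mono FFu by (simp add: gg_def divide_strict_right_mono)

lemma tval_eq: "tval z w u x = (THE t. t \<in> {0..u} \<and> gg t = x)"
  unfolding tval_def gg_def FF_def by (rule refl)

lemma tval_gg:
  assumes t: "t \<in> {0..u}" shows "tval z w u (gg t) = t"
  unfolding tval_eq
proof (rule the_equality)
  show "t \<in> {0..u} \<and> gg t = gg t" using t by simp
  fix t' assume t': "t' \<in> {0..u} \<and> gg t' = gg t"
  show "t' = t"
  proof (rule linorder_cases[of t' t])
    assume "t' < t" thus ?thesis using gg_mono[of t' t] t t' by auto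
  next
    assume "t < t'" thus ?thesis using gg_mono[of t t'] t t' by auto
  qed
qed

lemma gg0: "gg 0 = 0" by (simp add: gg_def FF0)
lemma ggu: "gg u = 1" using FFu by (simp add: gg_def)

lemma gg_cont: "continuous_on S gg"
  unfolding gg_def[abs_def] using FFu by (intro continuous_intros FF_cont) auto

lemma gg_le: "0 \<le> a \<Longrightarrow> a \<le> b \<Longrightarrow> b \<le> u \<Longrightarrow> gg a \<le> gg b"
  using gg_mono[of a b] by (cases "a = b") auto

lemma gg_range: "t \<in> {0..u} \<Longrightarrow> gg t \<in> {0..1}"
  using gg_le[of 0 t] gg_le[of t u] gg0 ggu by auto

lemma tval_range: "x \<in> {0..1} \<Longrightarrow> tval z w u x \<in> {0..u} \<and> gg (tval z w u x) = x"
proof -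
  assume x: "x \<in> {0..1}"
  have "\<exists>t\<ge>0. t \<le> u \<and> gg t = x"
    using x gg0 ggu u by (intro IVT'[of gg 0 x u] gg_cont) auto
  then obtain t where t: "0 \<le> t" "t \<le> u" "gg t = x" by blast
  hence "tval z w u x = t" using tval_gg[of t] by simp
  thus ?thesis using t by simp
qed

lemma gg_image: "gg ` {0..u} = {0..1}"
proof (intro equalityI subsetI)
  fix y assume "y \<in> gg ` {0..u}" thus "y \<in> {0..1}" using gg_range by blast
next
  fix x :: real assume x: "x \<in> {0..1}"
  hence "x = gg (tval z w u x)" "tval z w u x \<in> {0..u}" using tval_range by auto
  thus "x \<in> gg ` {0..u}" by blast
qed

lemma tval_cont: "continuous_on {0..1} (tval z w u)"
proof -
  have "continuous_on (gg ` {0..u}) (tval z w u)"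
    by (rule continuous_on_inv[OF gg_cont compact_Icc]) (simp add: tval_gg)
  thus ?thesis by (simp add: gg_image)
qed

end


lemma preimage_eq:
  assumes H: "is_H H" and G1: "G1 \<in> inv_H H ` sources H"
  shows "fst G1 + 1 = fst H"
    and "{1..fst G1 + 1} \<inter> finalize G1 -` {H} = {j \<in> sources H. inv_H H j = G1}"
proof -
  obtain j0 where j0: "j0 \<in> sources H" "G1 = inv_H H j0" using G1 by blast
  have n1: "fst H \<ge> 1" using H by (simp add: is_H_def)
  show fst: "fst G1 + 1 = fst H" using j0 n1 by (simp add: inv_H_def)
  show "{1..fst G1 + 1} \<inter> finalize G1 -` {H} = {j \<in> sources H. inv_H H j = G1}"
  proof (intro equalityI subsetI)
    fix j assume "j \<in> {1..fst G1 + 1} \<inter> finalize G1 -` {H}"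
    hence j: "1 \<le> j" "j \<le> fst G1 + 1" "finalize G1 j = H" by auto
    show "j \<in> {j \<in> sources H. inv_H H j = G1}"
      using fin_inv[OF j(1,2)] fin_j_src[OF j(1,2)] j(3) by simp
  next
    fix j assume "j \<in> {j \<in> sources H. inv_H H j = G1}"
    hence j: "j \<in> sources H" "inv_H H j = G1" by auto
    show "j \<in> {1..fst G1 + 1} \<inter> finalize G1 -` {H}"
      using inv_fin[OF H j(1)] j(2) by auto
  qed
qed

lemma inv_stats:
  assumes H: "is_H H" and j: "j \<in> sources H"
  shows "is_dag (inv_H H j)" "nverts (inv_H H j) = nverts H - 1"
    "nedges (inv_H H j) = nedges H" "nsources (inv_H H j) = nsources H - 1"
proof -
  note f = inv_fin[OF H j]
  have dH: "is_dag H" using H by (simp add: is_H_def)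
  show "is_dag (inv_H H j)" using fin_dag[OF f(1,2)] f(3) dH by simp
  show "nverts (inv_H H j) = nverts H - 1" by (simp add: nverts_def inv_H_def)
  show "nedges (inv_H H j) = nedges H" using fin_nedges[OF f(1,2)] f(3) by simp
  show "nsources (inv_H H j) = nsources H - 1" using fin_nsources[OF f(1,2)] f(3) by simp
qed

lemma pmf_given_t:
  assumes H: "is_H H" and pD: "\<And>G. is_dag G \<Longrightarrow> pmf (D t) G = weight x w t G / Z"
  shows "pmf (GammaH_given_t D t) H =
    real (nsources H) * (x ^ (nverts H - 1) * w ^ nedges H * t ^ (nsources H - 1) /
      ((1 + w) ^ ((nverts H - 1) choose 2) * fact (nverts H - 1))) / Z / real (nverts H)"
proof -
  define S where "S = sources H"
  define A where "A = inv_H H ` S"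
  define \<phi> where "\<phi> G1 = pmf (map_pmf (finalize G1) (pmf_of_set {1..fst G1 + 1})) H" for G1
  define W where "W = x ^ (nverts H - 1) * w ^ nedges H * t ^ (nsources H - 1) /
      ((1 + w) ^ ((nverts H - 1) choose 2) * fact (nverts H - 1))"
  have n1: "fst H \<ge> 1" using H by (simp add: is_H_def)
  have \<phi>: "\<phi> G1 = real (card ({1..fst G1 + 1} \<inter> finalize G1 -` {H})) / real (fst G1 + 1)" for G1
    unfolding \<phi>_def pmf_map by (subst measure_pmf_of_set) auto
  have "pmf (GammaH_given_t D t) H = measure_pmf.expectation (D t) \<phi>"
    unfolding GammaH_given_t_def pmf_bind \<phi>_def ..
  also have "\<dots> = (\<Sum>G1\<in>A. \<phi> G1 * pmf (D t) G1)"
  proof (rule integral_measure_pmf_real)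
    show "finite A" by (simp add: A_def S_def)
    fix G1 assume "\<phi> G1 \<noteq> 0"
    hence "{1..fst G1 + 1} \<inter> finalize G1 -` {H} \<noteq> {}" using \<phi> by auto
    then obtain j where j: "1 \<le> j" "j \<le> fst G1 + 1" "finalize G1 j = H" by auto
    have "G1 = inv_H H j" using fin_inv[OF j(1,2)] j(3) by simp
    moreover have "j \<in> S" using fin_j_src[OF j(1,2)] j(3) by (simp add: S_def)
    ultimately show "G1 \<in> A" by (simp add: A_def)
  qed
  also have "\<dots> = (\<Sum>G1\<in>A. (\<Sum>j\<in>{j\<in>S. inv_H H j = G1}. pmf (D t) (inv_H H j)) / real (fst H))"
  proof (intro sum.cong refl)
    fix G1 assume G1: "G1 \<in> A"
    have e: "fst G1 + 1 = fst H" "{1..fst G1 + 1} \<inter> finalize G1 -` {H} = {j \<in> S. inv_H H j = G1}"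
      using preimage_eq[OF H] G1 by (auto simp: A_def S_def)
    have "(\<Sum>j\<in>{j\<in>S. inv_H H j = G1}. pmf (D t) (inv_H H j)) = (\<Sum>j\<in>{j\<in>S. inv_H H j = G1}. pmf (D t) G1)"
      by (intro sum.cong refl) auto
    also have "\<dots> = real (card {j\<in>S. inv_H H j = G1}) * pmf (D t) G1" by simp
    finally show "\<phi> G1 * pmf (D t) G1 = (\<Sum>j\<in>{j\<in>S. inv_H H j = G1}. pmf (D t) (inv_H H j)) / real (fst H)"
      using \<phi>[of G1] e by (simp add: of_nat_add[symmetric] del: of_nat_add)
  qed
  also have "\<dots> = (\<Sum>j\<in>S. pmf (D t) (inv_H H j)) / real (fst H)"
    unfolding sum_divide_distrib[symmetric]
    by (subst sum.group[symmetric, where g = "inv_H H" and T = A]) (auto simp: A_def S_def)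
  also have "(\<Sum>j\<in>S. pmf (D t) (inv_H H j)) = (\<Sum>j\<in>S. W / Z)"
  proof (intro sum.cong refl)
    fix j assume j: "j \<in> S"
    note st = inv_stats[OF H j[unfolded S_def]]
    show "pmf (D t) (inv_H H j) = W / Z"
      using pD[OF st(1)] st(2-4) by (simp add: weight_def W_def)
  qed
  also have "\<dots> = real (nsources H) * (W / Z)" by (simp add: S_def nsources_def)
  finally show ?thesis by (simp add: W_def nverts_def)
qed


lemma finite_Hs: "finite (Hs_of_size n)"
  by (rule finite_subset[OF _ finite_dags_of_size[of n]])
     (auto simp: Hs_of_size_def dags_of_size_def is_H_def)

lemma Hs0: "Hs_of_size 0 = {}"
  by (auto simp: Hs_of_size_def is_H_def)

lemma H_terms0: "H_terms z w u 0 = 0"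
  by (simp add: H_terms_def Hs0)

lemma nsources_H_pos: "is_H H \<Longrightarrow> nsources H \<ge> 1"
  using dag_has_source[of H] by (auto simp: is_H_def nsources_def card_gt_0_iff Suc_le_eq)

lemma H_terms_Suc:
  "H_terms z w u (Suc m) = z ^ Suc m / ((1 + w) ^ (Suc m choose 2) * fact m) *
     (\<Sum>G\<in>dags_of_size m. w ^ nedges G * u ^ (nsources G + 1) / real (nsources G + 1))"
proof -
  define g where "g p = weight z w u (fst p) / real (nsources (fst p))" for p :: "ldg \<times> nat"
  define h where "h p = weight z w u (finalize (fst p) (snd p)) / real (nsources (finalize (fst p) (snd p)))" for p :: "ldg \<times> nat"
  have "H_terms z w u (Suc m) = (\<Sum>H\<in>Hs_of_size (Suc m). \<Sum>j\<in>sources H. g (H, j))"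
    unfolding H_terms_def
  proof (intro sum.cong refl)
    fix H assume "H \<in> Hs_of_size (Suc m)"
    hence "nsources H \<ge> 1" using nsources_H_pos by (auto simp: Hs_of_size_def)
    hence c: "real (card (sources H)) \<noteq> 0" unfolding nsources_def by (metis of_nat_0_eq_iff not_one_le_zero)
    have "(\<Sum>j\<in>sources H. g (H, j)) = real (card (sources H)) * (weight z w u H / real (nsources H))"
      by (simp add: g_def)
    thus "weight z w u H = (\<Sum>j\<in>sources H. g (H, j))"
      using c by (simp add: nsources_def)
  qed
  also have "\<dots> = (\<Sum>p\<in>Sigma (Hs_of_size (Suc m)) sources. g p)"
    by (subst sum.Sigma) (auto simp: finite_Hs)
  also have "\<dots> = (\<Sum>p\<in>dags_of_size m \<times> {1..Suc m}. h p)"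
  proof (rule sum.reindex_bij_witness[where j = "\<lambda>p. (inv_H (fst p) (snd p), snd p)"
                                    and i = "\<lambda>p. (finalize (fst p) (snd p), snd p)"])
    fix p assume p: "p \<in> Sigma (Hs_of_size (Suc m)) sources"
    then obtain H j where pe: "p = (H, j)" and H: "is_H H" "fst H = Suc m" and j: "j \<in> sources H"
      by (auto simp: Hs_of_size_def)
    note f = inv_fin[OF H(1) j]
    note st = inv_stats[OF H(1) j]
    show "(finalize (fst (inv_H (fst p) (snd p), snd p)) (snd (inv_H (fst p) (snd p), snd p)),
           snd (inv_H (fst p) (snd p), snd p)) = p"
      using f pe by simp
    show "(inv_H (fst p) (snd p), snd p) \<in> dags_of_size m \<times> {1..Suc m}"
      using st f pe H by (auto simp: dags_of_size_def nverts_def)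
    show "h (inv_H (fst p) (snd p), snd p) = g p"
      using f pe by (simp add: h_def g_def)
  next
    fix p assume p: "p \<in> dags_of_size m \<times> {1..Suc m}"
    then obtain G1 j where pe: "p = (G1, j)" and G1: "is_dag G1" "fst G1 = m" and j: "1 \<le> j" "j \<le> Suc m"
      by (auto simp: dags_of_size_def)
    have j': "1 \<le> j" "j \<le> fst G1 + 1" using j G1 by auto
    show "(inv_H (fst (finalize (fst p) (snd p), snd p)) (snd (finalize (fst p) (snd p), snd p)),
           snd (finalize (fst p) (snd p), snd p)) = p"
      using fin_inv[OF j'] pe by simp
    show "(finalize (fst p) (snd p), snd p) \<in> Sigma (Hs_of_size (Suc m)) sources"
      using fin_H[OF j' G1(1)] fin_fst[OF j'] fin_j_src[OF j'] G1 pe by (simp add: Hs_of_size_def)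
  qed
  also have "\<dots> = (\<Sum>G\<in>dags_of_size m. \<Sum>j\<in>{1..Suc m}. h (G, j))"
    by (simp only: sum.cartesian_product case_prod_eta)
  also have "\<dots> = (\<Sum>G\<in>dags_of_size m. z ^ Suc m / ((1 + w) ^ (Suc m choose 2) * fact m) *
                      (w ^ nedges G * u ^ (nsources G + 1) / real (nsources G + 1)))"
  proof (intro sum.cong refl)
    fix G assume G: "G \<in> dags_of_size m"
    have hj: "h (G, j) = z ^ Suc m * w ^ nedges G * u ^ (nsources G + 1) /
                ((1 + w) ^ (Suc m choose 2) * fact (Suc m)) / real (nsources G + 1)"
      if j: "j \<in> {1..Suc m}" for j
    proof -
      have j': "1 \<le> j" "j \<le> fst G + 1" using j G by (auto simp: dags_of_size_def)
      show ?thesis using fin_fst[OF j'] fin_nedges[OF j'] fin_nsources[OF j'] G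
        by (simp add: h_def weight_def nverts_def dags_of_size_def)
    qed
    have "(\<Sum>j\<in>{1..Suc m}. h (G, j)) = real (Suc m) * (z ^ Suc m * w ^ nedges G * u ^ (nsources G + 1) /
                ((1 + w) ^ (Suc m choose 2) * fact (Suc m)) / real (nsources G + 1))"
      using hj by simp
    also have "\<dots> = z ^ Suc m / ((1 + w) ^ (Suc m choose 2) * fact m) *
                      (w ^ nedges G * u ^ (nsources G + 1) / real (nsources G + 1))"
      by (simp add: field_simps del: of_nat_Suc)
    finally show "(\<Sum>j\<in>{1..Suc m}. h (G, j)) = z ^ Suc m / ((1 + w) ^ (Suc m choose 2) * fact m) *
                      (w ^ nedges G * u ^ (nsources G + 1) / real (nsources G + 1))" .
  qed
  also have "\<dots> = z ^ Suc m / ((1 + w) ^ (Suc m choose 2) * fact m) *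
     (\<Sum>G\<in>dags_of_size m. w ^ nedges G * u ^ (nsources G + 1) / real (nsources G + 1))"
    by (simp add: sum_distrib_left)
  finally show ?thesis .
qed

lemma Iint:
  "(\<Sum>G\<in>dags_of_size m. w ^ nedges G * v ^ (nsources G + 1) / real (nsources G + 1)) =
   (\<Sum>a\<le>m. of_nat (m choose a) * (1 + w) ^ (a * (m - a)) * Apoly w 1 (m - a) *
        (((v - 1) ^ (a + 1) - (- 1) ^ (a + 1)) / real (a + 1)))"
proof -
  define P where "P v = (\<Sum>G\<in>dags_of_size m. w ^ nedges G * v ^ (nsources G + 1) / real (nsources G + 1))" for v :: real
  define R where "R v = (\<Sum>a\<le>m. of_nat (m choose a) * (1 + w) ^ (a * (m - a)) * Apoly w 1 (m - a) *
        (((v - 1) ^ (a + 1) - (- 1) ^ (a + 1)) / real (a + 1)))" for v :: real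
  have dP: "(P has_real_derivative Apoly w v m) (at v)" for v
  proof -
    have "(P has_real_derivative (\<Sum>G\<in>dags_of_size m. w ^ nedges G * v ^ nsources G)) (at v)"
      unfolding P_def[abs_def]
    proof (rule DERIV_sum)
      fix G
      have "((\<lambda>v. v ^ (nsources G + 1)) has_real_derivative real (nsources G + 1) * v ^ nsources G) (at v)"
        using DERIV_pow[of "nsources G + 1" v] by simp
      hence "((\<lambda>v. w ^ nedges G * v ^ (nsources G + 1) / real (nsources G + 1)) has_real_derivative
             w ^ nedges G * (real (nsources G + 1) * v ^ nsources G) / real (nsources G + 1)) (at v)"
        by (intro DERIV_cdivide DERIV_cmult)
      moreover have "real (nsources G + 1) \<noteq> 0" by simp
      ultimately show "((\<lambda>v. w ^ nedges G * v ^ (nsources G + 1) / real (nsources G + 1)) has_real_derivative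
             w ^ nedges G * v ^ nsources G) (at v)"
        by (simp del: of_nat_Suc of_nat_add add: field_simps)
    qed
    thus ?thesis by (simp add: Apoly_def)
  qed
  have dR: "(R has_real_derivative Apoly w v m) (at v)" for v
  proof -
    have "(R has_real_derivative (\<Sum>a\<le>m. of_nat (m choose a) * (v - 1) ^ a * (1 + w) ^ (a * (m - a)) * Apoly w 1 (m - a))) (at v)"
      unfolding R_def[abs_def]
    proof (rule DERIV_sum)
      fix a
      have d1: "((\<lambda>v. of_nat (m choose a) * (1 + w) ^ (a * (m - a)) * Apoly w 1 (m - a) *
        (((v - 1) ^ (a + 1) - (- 1) ^ (a + 1)) / real (a + 1))) has_real_derivative
         of_nat (m choose a) * (1 + w) ^ (a * (m - a)) * Apoly w 1 (m - a) *
        ((real (a + 1) * (v - 1) ^ a * 1 - 0) / real (a + 1))) (at v)"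
      proof -
        have p0: "((\<lambda>v. v - 1) has_real_derivative 1) (at v)"
          by (auto intro!: derivative_eq_intros)
        have p: "((\<lambda>v. (v - 1) ^ Suc a) has_real_derivative of_nat (a + 1) * (1 * (v - 1) ^ a)) (at v)"
          using DERIV_power_Suc[OF p0, of a] by (simp add: add.commute)
        have "((\<lambda>v. of_nat (m choose a) * (1 + w) ^ (a * (m - a)) * Apoly w 1 (m - a) *
          (((v - 1) ^ Suc a - (- 1) ^ (a + 1)) / real (a + 1))) has_real_derivative
           of_nat (m choose a) * (1 + w) ^ (a * (m - a)) * Apoly w 1 (m - a) *
          ((of_nat (a + 1) * (1 * (v - 1) ^ a) - 0) / real (a + 1))) (at v)"
          by (intro DERIV_cmult DERIV_cdivide DERIV_diff p DERIV_const)
        thus ?thesis by simp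
      qed
      have ne: "real (a + 1) \<noteq> 0" by simp
      show "((\<lambda>v. of_nat (m choose a) * (1 + w) ^ (a * (m - a)) * Apoly w 1 (m - a) *
        (((v - 1) ^ (a + 1) - (- 1) ^ (a + 1)) / real (a + 1))) has_real_derivative
         of_nat (m choose a) * (v - 1) ^ a * (1 + w) ^ (a * (m - a)) * Apoly w 1 (m - a)) (at v)"
        by (rule DERIV_cong[OF d1]) (use ne in \<open>simp del: of_nat_Suc of_nat_add add: field_simps\<close>)
    qed
    thus ?thesis using Apoly_CI[of w v m] by simp
  qed
  have "\<forall>x. ((\<lambda>v. P v - R v) has_real_derivative 0) (at x)"
    using DERIV_diff[OF dP dR] by simp
  from DERIV_isconst_all[OF this, of v 0] have "P v - R v = P 0 - R 0" by simp
  moreover have "P 0 = 0" by (simp add: P_def)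
  moreover have "R 0 = 0" by (simp add: R_def)
  ultimately show ?thesis by (simp add: P_def R_def)
qed


definition fco :: "real \<Rightarrow> real \<Rightarrow> real \<Rightarrow> nat \<Rightarrow> real" where
  "fco z w u b = ((u - 1) * z) ^ b / Qf w b - (- z) ^ b / Qf w b"

lemma term_id:
  assumes w: "0 \<le> w" and a: "a \<le> m"
  shows "z ^ Suc m / ((1 + w) ^ (Suc m choose 2) * fact m) *
           (of_nat (m choose a) * (1 + w) ^ (a * (m - a)) * A * (Da / real (a + 1)))
       = (Da * z ^ Suc a / Qf w (Suc a)) * ((z / (1 + w)) ^ (m - a) * A / Qf w (m - a))"
proof -
  define X where "X = 1 + w"
  define B where "B = real (Suc m choose Suc a)"
  have X: "0 < X" using w by (simp add: X_def)
  have hb: "real (m choose a) = B * real (Suc a) / real (Suc m)"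
    using Suc_times_binomial_eq[of m a] unfolding B_def
    by (simp del: of_nat_Suc add: field_simps flip: of_nat_mult)
  have hc: "B * X ^ (Suc a * (m - a)) / Qf w (Suc m) = 1 / (Qf w (Suc a) * Qf w (m - a))"
    using coeff_id[of "Suc a" "Suc m" w] a w by (simp add: B_def X_def)
  have q1: "0 < Qf w (Suc a)" "0 < Qf w (m - a)" using Qf_pos[OF w] by auto
  have QSm: "Qf w (Suc m) = X ^ (Suc m choose 2) * (real (Suc m) * fact m)"
    by (simp add: Qf_def X_def)
  have pw: "X ^ (Suc a * (m - a)) = X ^ (m - a) * X ^ (a * (m - a))"
    by (simp add: power_add)
  have zz: "z ^ Suc m = z ^ Suc a * z ^ (m - a)" using a by (simp flip: power_add)
  have "(Da * z ^ Suc a / Qf w (Suc a)) * ((z / (1 + w)) ^ (m - a) * A / Qf w (m - a))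
      = Da * z ^ Suc a * z ^ (m - a) * A / X ^ (m - a) * (1 / (Qf w (Suc a) * Qf w (m - a)))"
    using q1 X by (simp add: X_def power_divide field_simps)
  also have "\<dots> = Da * z ^ Suc a * z ^ (m - a) * A / X ^ (m - a) * (B * X ^ (Suc a * (m - a)) / Qf w (Suc m))"
    by (subst hc) (rule refl)
  also have "\<dots> = z ^ Suc m / (X ^ (Suc m choose 2) * fact m) *
           ((B * real (Suc a) / real (Suc m)) * X ^ (a * (m - a)) * A * (Da / real (Suc a)))"
    unfolding QSm pw zz using X by (simp del: of_nat_Suc add: field_simps)
  finally show ?thesis by (simp add: hb X_def del: of_nat_Suc)
qed

lemma H_terms_conv:
  assumes w: "0 \<le> w"
  shows "H_terms z w u N = (\<Sum>i\<le>N. fco z w u i * DAG_terms (z / (1 + w)) w 1 (N - i))"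
proof (cases N)
  case 0 thus ?thesis by (simp add: H_terms0 fco_def)
next
  case (Suc m)
  have "H_terms z w u (Suc m) = z ^ Suc m / ((1 + w) ^ (Suc m choose 2) * fact m) *
     (\<Sum>a\<le>m. of_nat (m choose a) * (1 + w) ^ (a * (m - a)) * Apoly w 1 (m - a) *
        (((u - 1) ^ (a + 1) - (- 1) ^ (a + 1)) / real (a + 1)))"
    by (simp only: H_terms_Suc Iint)
  also have "\<dots> = (\<Sum>a\<le>m. fco z w u (Suc a) * DAG_terms (z / (1 + w)) w 1 (m - a))"
    unfolding sum_distrib_left
  proof (intro sum.cong refl)
    fix a assume a: "a \<in> {..m}"
    have "fco z w u (Suc a) = ((u - 1) ^ (a + 1) - (- 1) ^ (a + 1)) * z ^ Suc a / Qf w (Suc a)"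
      unfolding fco_def power_mult_distrib power_minus[of z]
      by (simp only: Suc_eq_plus1 diff_divide_distrib left_diff_distrib)
    thus "z ^ Suc m / ((1 + w) ^ (Suc m choose 2) * fact m) *
         (of_nat (m choose a) * (1 + w) ^ (a * (m - a)) * Apoly w 1 (m - a) *
          (((u - 1) ^ (a + 1) - (- 1) ^ (a + 1)) / real (a + 1))) =
         fco z w u (Suc a) * DAG_terms (z / (1 + w)) w 1 (m - a)"
      using term_id[OF w, of a m z "Apoly w 1 (m - a)" "(u - 1) ^ (a + 1) - (- 1) ^ (a + 1)"] a
      by (simp add: DAG_terms_eq)
  qed
  also have "\<dots> = (\<Sum>i\<le>Suc m. fco z w u i * DAG_terms (z / (1 + w)) w 1 (Suc m - i))"
    by (subst sum.atMost_Suc_shift) (simp add: fco_def)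
  finally show ?thesis using Suc by simp
qed

lemma Hgf_eq:
  assumes w: "0 \<le> w" and z: "0 \<le> z" and s: "summable (DAG_terms (z / (1 + w)) w 1)"
  shows "Hgf z w u = (SetF ((u - 1) * z) w - SetF (- z) w) * DAGgf (z / (1 + w)) w 1"
proof -
  let ?d = "DAG_terms (z / (1 + w)) w 1"
  have x0: "0 \<le> z / (1 + w)" using w z by simp
  have sf: "summable (\<lambda>b. norm (fco z w u b))"
  proof (rule summable_comparison_test[OF _ summable_add[OF Set_abs_summable[OF w, of "(u - 1) * z"] Set_abs_summable[OF w, of "- z"]]])
    show "\<exists>N. \<forall>n\<ge>N. norm (norm (fco z w u n)) \<le> norm (((u - 1) * z) ^ n / Qf w n) + norm ((- z) ^ n / Qf w n)"
    proof (intro exI allI impI)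
      fix n :: nat
      have "norm (fco z w u n) \<le> norm (((u - 1) * z) ^ n / Qf w n) + norm ((- z) ^ n / Qf w n)"
        unfolding fco_def by (rule norm_triangle_ineq4)
      thus "norm (norm (fco z w u n)) \<le> norm (((u - 1) * z) ^ n / Qf w n) + norm ((- z) ^ n / Qf w n)"
        by simp
    qed
  qed
  have sd: "summable (\<lambda>n. norm (?d n))"
    using s DAG_nonneg[OF w _ x0, of 1] by simp
  have "(\<Sum>k. fco z w u k) * (\<Sum>k. ?d k) = (\<Sum>k. \<Sum>i\<le>k. fco z w u i * ?d (k - i))"
    by (rule Cauchy_product[OF sf sd])
  also have "\<dots> = Hgf z w u"
  proof -
    have "H_terms z w u = (\<lambda>k. \<Sum>i\<le>k. fco z w u i * ?d (k - i))"
      by (rule ext) (rule H_terms_conv[OF w])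
    thus ?thesis unfolding Hgf_def by simp
  qed
  finally have "Hgf z w u = (\<Sum>k. fco z w u k) * DAGgf (z / (1 + w)) w 1"
    by (simp add: DAGgf_def)
  moreover have "(\<Sum>k. fco z w u k) = SetF ((u - 1) * z) w - SetF (- z) w"
    unfolding fco_def SetF_eq
    by (rule suminf_diff[symmetric]) (auto intro: Set_summable[OF w])
  ultimately show ?thesis by simp
qed


theorem lemma7:
  fixes z w u :: real and D :: "real \<Rightarrow> ldg pmf" and H :: ldg
  assumes "z > 0" "w > 0" "u > 0"
    and "summable (H_terms z w u)"
    and "\<And>t. t \<in> {0..u} \<Longrightarrow> summable (DAG_terms (z / (1 + w)) w t)"
    and "\<And>t G. t \<in> {0..u} \<Longrightarrow> is_dag G \<Longrightarrow>
           pmf (D t) G = weight (z / (1 + w)) w t G / DAGgf (z / (1 + w)) w t"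
    and "is_H H"
  shows "GammaH_prob D z w u H =
           z ^ nverts H * w ^ nedges H * u ^ nsources H /
           (fact (nverts H) * (1 + w) ^ (nverts H choose 2) * Hgf z w u)"
proof -
  note A = assms(1) assms(2) assms(3) assms(5)
  have z: "0 < z" and w: "0 < w" and u: "0 < u" using assms by auto
  have w0: "0 \<le> w" using w by simp
  let ?x0 = "z / (1 + w)"
  have x0e: "x0 z w = ?x0" by (rule x0_def[OF A])
  have x0p: "0 < ?x0" using z w by simp
  define K where "K = KK z w"
  have K1: "1 \<le> K" unfolding K_def by (rule KK_ge1[OF A])
  have FFu: "0 < FF z w u" by (rule FFu[OF A])
  define n where "n = nverts H"
  define m where "m = nedges H"
  define k where "k = nsources H"
  have n1: "n \<ge> 1" using assms(7) by (simp add: is_H_def n_def nverts_def)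
  have k1: "k \<ge> 1" using nsources_H_pos[OF assms(7)] by (simp add: k_def)
  define P where "P = ?x0 ^ (n - 1) * w ^ m / ((1 + w) ^ ((n - 1) choose 2) * fact (n - 1))"
  define \<phi> where "\<phi> t = real k * (P * t ^ (k - 1)) / (SetF ((t - 1) * ?x0) w * K) / real n" for t
  have Spos: "t \<in> {0..u} \<Longrightarrow> 0 < SetF ((t - 1) * ?x0) w" for t
    using Set_pos[OF A, of t] x0e by simp
  have h_eq: "pmf (GammaH_given_t D t) H = \<phi> t" if t: "t \<in> {0..u}" for t
  proof -
    have "pmf (GammaH_given_t D t) H =
      real (nsources H) * (?x0 ^ (nverts H - 1) * w ^ nedges H * t ^ (nsources H - 1) /
      ((1 + w) ^ ((nverts H - 1) choose 2) * fact (nverts H - 1))) / DAGgf ?x0 w t / real (nverts H)"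
      by (rule pmf_given_t[OF assms(7)]) (rule assms(6)[OF t])
    also have "DAGgf ?x0 w t = SetF ((t - 1) * ?x0) w * K"
      using DAGgf_eq[OF A, of t] x0e by (simp add: K_def)
    finally show ?thesis
      by (simp add: \<phi>_def P_def n_def m_def k_def mult_ac)
  qed
  define f where "f x = pmf (GammaH_given_t D (tval z w u x)) H" for x
  have "GammaH_prob D z w u H = interval_lebesgue_integral lborel (ereal 0) (ereal 1) f"
    unfolding GammaH_prob_def f_def by (subst interval_integral_Ico) auto
  also have gg0: "gg z w u 0 = 0" by (rule gg0[OF A])
  hence "ereal 0 = ereal (gg z w u 0)" by simp
  also have ggu: "gg z w u u = 1" by (rule ggu[OF A])
  hence "ereal 1 = ereal (gg z w u u)" by simp
  finally have I1: "GammaH_prob D z w u H = interval_lebesgue_integral lborel (ereal (gg z w u 0)) (ereal (gg z w u u)) f" .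
  define g' where "g' t = z * SetF ((t - 1) * ?x0) w / FF z w u" for t
  have gge: "gg z w u = (\<lambda>t. FF z w t / FF z w u)"
    by (rule ext) (rule gg_def[OF A])
  have cS: "continuous_on S (\<lambda>t. SetF ((t - 1) * ?x0) w)" for S
  proof (rule continuous_at_imp_continuous_on, intro ballI)
    fix t
    show "isCont (\<lambda>t. SetF ((t - 1) * ?x0) w) t"
      by (rule isCont_o2[OF _ SetF_cont[OF w0]]) (intro continuous_intros)
  qed
  have c1: "continuous_on {0..u} (\<lambda>t. SetF ((t - 1) * ?x0) w * K)"
    by (intro continuous_on_mult cS continuous_on_const)
  have c2: "continuous_on {0..u} (\<lambda>t. real k * (P * t ^ (k - 1)))"
    by (intro continuous_intros)
  have nz: "\<forall>t\<in>{0..u}. SetF ((t - 1) * ?x0) w * K \<noteq> 0"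
  proof
    fix t assume "t \<in> {0..u}"
    hence "0 < SetF ((t - 1) * ?x0) w" by (rule Spos)
    thus "SetF ((t - 1) * ?x0) w * K \<noteq> 0" using K1 by simp
  qed
  have c3: "continuous_on {0..u} (\<lambda>t. real k * (P * t ^ (k - 1)) / (SetF ((t - 1) * ?x0) w * K))"
    by (rule continuous_on_divide[OF c2 c1 nz])
  have \<phi>cont: "continuous_on {0..u} \<phi>"
    unfolding \<phi>_def[abs_def]
    by (rule continuous_on_divide[OF c3 continuous_on_const]) (use n1 in simp)
  have tcont: "continuous_on {0..1} (tval z w u)" by (rule tval_cont[OF A])
  have trange: "tval z w u x \<in> {0..u}" if "x \<in> {0..1}" for x using tval_range[OF A that] by simp
  have fcont: "continuous_on {0..1} f"
  proof -
    have "continuous_on {0..1} (\<lambda>x. \<phi> (tval z w u x))"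
      by (rule continuous_on_compose2[OF \<phi>cont tcont]) (use trange in auto)
    moreover have "continuous_on {0..1} (\<lambda>x. \<phi> (tval z w u x)) = continuous_on {0..1} f"
    proof (rule continuous_on_cong)
      fix x :: real assume "x \<in> {0..1}"
      thus "\<phi> (tval z w u x) = f x" using trange h_eq by (simp add: f_def)
    qed simp
    ultimately show ?thesis by simp
  qed
  have sub: "interval_lebesgue_integral lborel (ereal 0) (ereal u) (\<lambda>x. g' x *\<^sub>R f (gg z w u x))
      = interval_lebesgue_integral lborel (ereal (gg z w u 0)) (ereal (gg z w u u)) f"
  proof (rule interval_integral_substitution_finite)
    show "0 \<le> u" using u by simp
    fix x assume "0 \<le> x" "x \<le> u"
    have "((\<lambda>t. FF z w t / FF z w u) has_real_derivative z * SetF ((x - 1) * x0 z w) w / FF z w u) (at x)"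
      by (rule DERIV_cdivide[OF FF_deriv[OF A]])
    thus "(gg z w u has_real_derivative g' x) (at x within {0..u})"
      unfolding gge g'_def x0e by (rule has_field_derivative_at_within)
  next
    show "continuous_on (gg z w u ` {0..u}) f" using fcont gg_image[OF A] by simp
    show "continuous_on {0..u} g'"
      unfolding g'_def[abs_def] using FFu by (intro continuous_intros cS) auto
  qed
  define B where "B = z * real k * P / (FF z w u * K * real n)"
  have "interval_lebesgue_integral lborel (ereal 0) (ereal u) (\<lambda>x. g' x *\<^sub>R f (gg z w u x))
      = interval_lebesgue_integral lborel (ereal 0) (ereal u) (\<lambda>x. B * x ^ (k - 1))"
  proof (rule interval_integral_cong)
    fix x assume "x \<in> einterval (min (ereal 0) (ereal u)) (max (ereal 0) (ereal u))"
    hence x: "x \<in> {0..u}" using u by (auto simp: einterval_iff min_def max_def)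
    have "f (gg z w u x) = \<phi> x" using tval_gg[OF A x] h_eq[OF x] by (simp add: f_def)
    moreover have "SetF ((x - 1) * ?x0) w \<noteq> 0" using Spos[OF x] by simp
    ultimately show "g' x *\<^sub>R f (gg z w u x) = B * x ^ (k - 1)"
      using K1 FFu n1 by (simp add: g'_def \<phi>_def B_def field_simps)
  qed
  also have "\<dots> = B * u ^ k / real k - B * 0 ^ k / real k"
  proof (rule interval_integral_FTC_finite)
    show "continuous_on {min 0 u..max 0 u} (\<lambda>x. B * x ^ (k - 1))" by (intro continuous_intros)
    fix x :: real
    have "((\<lambda>x. B * x ^ k / real k) has_real_derivative B * (real k * x ^ (k - Suc 0)) / real k) (at x)"
      by (intro DERIV_cdivide DERIV_cmult DERIV_pow)
    moreover have "B * (real k * x ^ (k - Suc 0)) / real k = B * x ^ (k - 1)" using k1 by simp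
    ultimately have "((\<lambda>x. B * x ^ k / real k) has_real_derivative B * x ^ (k - 1)) (at x)" by simp
    thus "((\<lambda>x. B * x ^ k / real k) has_vector_derivative B * x ^ (k - 1)) (at x within {min 0 u..max 0 u})"
      by (simp add: has_real_derivative_iff_has_vector_derivative[symmetric] has_field_derivative_at_within)
  qed
  also have "\<dots> = B * u ^ k / real k" using k1 by simp
  finally have I2: "GammaH_prob D z w u H = B * u ^ k / real k" using I1 sub by simp
  have s1: "summable (DAG_terms ?x0 w 1)" using D1s[OF A] x0e by simp
  have "Hgf z w u = (SetF ((u - 1) * z) w - SetF (- z) w) * DAGgf ?x0 w 1"
    by (rule Hgf_eq[OF w0 _ s1]) (use z in simp)
  also have "\<dots> = FF z w u * K"
    using FF_def[OF A, of u] KK_def[OF A] x0e by (simp add: K_def)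
  finally have Hg: "Hgf z w u = FF z w u * K" .
  obtain n' where n': "n = Suc n'" using n1 by (cases n) auto
  have c2: "(Suc n' choose 2) = n' + (n' choose 2)" by (rule choose2_Suc)
  have kk: "real k \<noteq> 0" using k1 by simp
  have Bk: "B = real k * (z * P / (FF z w u * K * real n))" by (simp add: B_def)
  have "B * u ^ k / real k = z * P / (FF z w u * K * real n) * u ^ k"
    unfolding Bk using kk by simp
  also have "\<dots> = z ^ n * w ^ m * u ^ k / (fact n * (1 + w) ^ (n choose 2) * (FF z w u * K))"
    unfolding P_def n' c2 using FFu K1 w
    by (simp add: field_simps power_add power_divide)
  finally have "B * u ^ k / real k = z ^ n * w ^ m * u ^ k / (fact n * (1 + w) ^ (n choose 2) * (FF z w u * K))" .
  thus ?thesis using I2 Hg by (simp add: n_def m_def k_def)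
qed

end
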